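(* Let $V\in\mathcal{H}^{r\times n}$ and $Y\in\mathcal{H}^{n\times r}$ be left and right canonical matrices, respectively, for $T$ at $\lambda_0$. Then $VTY$ is invertible (as a meromorphic matrix), and $\Delta^{-1}VTY\Delta^{-1}\doteq\Delta^{-1}$ holds if and only if $(VTY)^{-1}\doteq\Delta^{-1}$.
   Context: Let $\Omega\subset\mathbb{C}$ be open and $\lambda_0\in\Omega$ fixed. $\mathcal{H}$ denotes the ring of holomorphic functions on $\Omega$, and $\mathcal{H}_0$ the ring of functions holomorphic in some neighborhood of $\lambda_0$. Write $\chi_0(\lambda)=\lambda-\lambda_0$. A matrix $M\in\mathcal{H}_0^{n\times n}$ is unimodular if it has an inverse in $\mathcal{H}_0^{n\times n}$. For meromorphic matrices $M_1,M_2$ of equal size, $M_1\doteq M_2$ means that $M_2-M_1$ is holomorphic in a neighborhood of $\lambda_0$. Throughout, $T\in\mathcal{H}^{n\times n}$ with $\det T$ not identically zero and $\det T(\lambda_0)=0$, and $r=\dim\ker T(\lambda_0)$. There exist unimodular $U_L,U_R\in\mathcal{H}_0^{n\times n}$ and uniquely determined integers $m_1\ge\cdots\ge m_n\ge 0$ (the partial multiplicities) with $U_LTU_R=\mathrm{diag}(\chi_0^{m_1},\dots,\chi_0^{m_n})$; $m_i>0$ exactly for $i\le r$. Set $\Delta=\mathrm{diag}(\chi_0^{m_1},\dots,\chi_0^{m_r})$. A root function for $T$ at $\lambda_0$ is $y\in\mathcal{H}^n$ with $y(\lambda_0)\neq0$ and $T(\lambda_0)y(\lambda_0)=0$; its multiplicity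 $\nu(y)$ is the order of the zero of $Ty$ at $\lambda_0$. A right canonical matrix for $T$ at $\lambda_0$ is $Y\in\mathcal{H}^{n\times r}$ whose columns $y_1,\dots,y_r$ are root functions such that (a) $y_1(\lambda_0),\dots,y_r(\lambda_0)$ are linearly independent, (b) $\sum_{i=1}^r\nu(y_i)=\sum_{i=1}^r m_i$, (c) $\nu(y_1)\ge\cdots\ge\nu(y_r)$. A left root function is a row vector $v\in\mathcal{H}^{1\times n}$ with $v(\lambda_0)\ne0$ and $v(\lambda_0)T(\lambda_0)=0$, with multiplicity the order of the zero of $vT$ at $\lambda_0$; a left canonical matrix $V\in\mathcal{H}^{r\times n}$ is defined analogously. *)

theory Defs
  imports "HOL-Analysis.Analysis" "Jordan_Normal_Form.Matrix_Kernel" "Jordan_Normal_Form.Determinant"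
begin

definition mat_holo :: "complex set \<Rightarrow> nat \<Rightarrow> nat \<Rightarrow> (complex \<Rightarrow> complex mat) \<Rightarrow> bool" where
  "mat_holo S r c A \<longleftrightarrow> (\<forall>z. A z \<in> carrier_mat r c) \<and>
     (\<forall>i<r. \<forall>j<c. (\<lambda>z. A z $$ (i,j)) holomorphic_on S)"

definition vec_holo :: "complex set \<Rightarrow> nat \<Rightarrow> (complex \<Rightarrow> complex vec) \<Rightarrow> bool" where
  "vec_holo S n f \<longleftrightarrow> (\<forall>z. f z \<in> carrier_vec n) \<and> (\<forall>i<n. (\<lambda>z. f z $ i) holomorphic_on S)"

definition vec_zero_order :: "complex \<Rightarrow> nat \<Rightarrow> (complex \<Rightarrow> complex vec) \<Rightarrow> enat" where
  "vec_zero_order l0 n f = Sup {enat k | k. \<exists>e>0. \<exists>h. vec_holo (ball l0 e) n h \<and>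
       (\<forall>z\<in>ball l0 e. f z = (z - l0)^k \<cdot>\<^sub>v h z)}"

definition unimodular_at :: "complex \<Rightarrow> nat \<Rightarrow> (complex \<Rightarrow> complex mat) \<Rightarrow> bool" where
  "unimodular_at l0 n U \<longleftrightarrow> (\<exists>e>0. \<exists>W. mat_holo (ball l0 e) n n U \<and> mat_holo (ball l0 e) n n W \<and>
       (\<forall>z\<in>ball l0 e. U z * W z = 1\<^sub>m n \<and> W z * U z = 1\<^sub>m n))"

definition diag_fun :: "nat \<Rightarrow> (nat \<Rightarrow> complex) \<Rightarrow> complex mat" where
  "diag_fun r d = mat r r (\<lambda>(i,j). if i = j then d i else 0)"

text \<open>m (indices 0..n-1) are the partial multiplicities of T at l0: decreasing, and
  U_L T U_R = diag((z-l0)^m_0,...,(z-l0)^m_(n-1)) near l0 with U_L, U_R unimodular.\<close>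

definition partial_multiplicities :: "complex \<Rightarrow> nat \<Rightarrow> (complex \<Rightarrow> complex mat) \<Rightarrow> (nat \<Rightarrow> nat) \<Rightarrow> bool" where
  "partial_multiplicities l0 n T m \<longleftrightarrow>
     (\<forall>i j. i \<le> j \<longrightarrow> j < n \<longrightarrow> m j \<le> m i) \<and>
     (\<exists>UL UR. unimodular_at l0 n UL \<and> unimodular_at l0 n UR \<and>
        (\<exists>e>0. \<forall>z\<in>ball l0 e. UL z * T z * UR z = diag_fun n (\<lambda>i. (z - l0) ^ m i)))"

definition root_function :: "complex set \<Rightarrow> complex \<Rightarrow> nat \<Rightarrow> (complex \<Rightarrow> complex mat) \<Rightarrow> (complex \<Rightarrow> complex vec) \<Rightarrow> bool" where
  "root_function \<Omega> l0 n T y \<longleftrightarrow> vec_holo \<Omega> n y \<and> y l0 \<noteq> 0\<^sub>v n \<and> T l0 *\<^sub>v y l0 = 0\<^sub>v n"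

definition root_mult :: "complex \<Rightarrow> nat \<Rightarrow> (complex \<Rightarrow> complex mat) \<Rightarrow> (complex \<Rightarrow> complex vec) \<Rightarrow> enat" where
  "root_mult l0 n T y = vec_zero_order l0 n (\<lambda>z. T z *\<^sub>v y z)"

definition left_root_function :: "complex set \<Rightarrow> complex \<Rightarrow> nat \<Rightarrow> (complex \<Rightarrow> complex mat) \<Rightarrow> (complex \<Rightarrow> complex vec) \<Rightarrow> bool" where
  "left_root_function \<Omega> l0 n T v \<longleftrightarrow> vec_holo \<Omega> n v \<and> v l0 \<noteq> 0\<^sub>v n \<and> transpose_mat (T l0) *\<^sub>v v l0 = 0\<^sub>v n"

definition left_root_mult :: "complex \<Rightarrow> nat \<Rightarrow> (complex \<Rightarrow> complex mat) \<Rightarrow> (complex \<Rightarrow> complex vec) \<Rightarrow> enat" where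
  "left_root_mult l0 n T v = vec_zero_order l0 n (\<lambda>z. transpose_mat (T z) *\<^sub>v v z)"

text \<open>Right canonical matrix Y (n x r); its columns are y_i = col (Y z) i.
  Condition (a) (linear independence of the columns of Y l0) is written out literally.
  Indices run over 0..r-1.\<close>

definition right_canonical :: "complex set \<Rightarrow> complex \<Rightarrow> nat \<Rightarrow> (complex \<Rightarrow> complex mat) \<Rightarrow> (nat \<Rightarrow> nat) \<Rightarrow> (complex \<Rightarrow> complex mat) \<Rightarrow> bool" where
  "right_canonical \<Omega> l0 n T m Y \<longleftrightarrow>
     (let r = kernel_dim (T l0); y = (\<lambda>i z. col (Y z) i) in
       mat_holo \<Omega> n r Y \<and>
       (\<forall>i<r. root_function \<Omega> l0 n T (y i)) \<and>
       (\<forall>c\<in>carrier_vec r. Y l0 *\<^sub>v c = 0\<^sub>v n \<longrightarrow> c = 0\<^sub>v r) \<and>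
       (\<Sum>i<r. root_mult l0 n T (y i)) = enat (\<Sum>i<r. m i) \<and>
       (\<forall>i j. i \<le> j \<longrightarrow> j < r \<longrightarrow> root_mult l0 n T (y j) \<le> root_mult l0 n T (y i)))"

definition left_canonical :: "complex set \<Rightarrow> complex \<Rightarrow> nat \<Rightarrow> (complex \<Rightarrow> complex mat) \<Rightarrow> (nat \<Rightarrow> nat) \<Rightarrow> (complex \<Rightarrow> complex mat) \<Rightarrow> bool" where
  "left_canonical \<Omega> l0 n T m V \<longleftrightarrow>
     (let r = kernel_dim (T l0); v = (\<lambda>i z. row (V z) i) in
       mat_holo \<Omega> r n V \<and>
       (\<forall>i<r. left_root_function \<Omega> l0 n T (v i)) \<and>
       (\<forall>c\<in>carrier_vec r. transpose_mat (V l0) *\<^sub>v c = 0\<^sub>v n \<longrightarrow> c = 0\<^sub>v r) \<and>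
       (\<Sum>i<r. left_root_mult l0 n T (v i)) = enat (\<Sum>i<r. m i) \<and>
       (\<forall>i j. i \<le> j \<longrightarrow> j < r \<longrightarrow> left_root_mult l0 n T (v j) \<le> left_root_mult l0 n T (v i)))"

text \<open>Pointwise inverse of a square matrix (adjugate formula); it is the inverse
  wherever the determinant is nonzero, which is all that matters for meromorphic
  matrices near l0.\<close>

definition mat_inv :: "complex mat \<Rightarrow> complex mat" where
  "mat_inv A = inverse (det A) \<cdot>\<^sub>m adj_mat A"

text \<open>M1 is congruent to M2 at l0 (M1 \<doteq> M2): M2 - M1 is (after removing the
  singularity) holomorphic in a neighbourhood of l0, i.e. every entry of M2 - M1 agrees
  on a punctured disc around l0 with a function holomorphic on the full disc.\<close>

definition mero_congr :: "complex \<Rightarrow> nat \<Rightarrow> nat \<Rightarrow> (complex \<Rightarrow> complex mat) \<Rightarrow> (complex \<Rightarrow> complex mat) \<Rightarrow> bool" where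
  "mero_congr l0 r c M1 M2 \<longleftrightarrow> (\<exists>e>0. \<forall>i<r. \<forall>j<c. \<exists>h. h holomorphic_on ball l0 e \<and>
       (\<forall>z\<in>ball l0 e - {l0}. M2 z $$ (i,j) - M1 z $$ (i,j) = h z))"

text \<open>A meromorphic matrix (near l0) is invertible iff its determinant is not
  identically zero near l0, i.e. nonzero on a punctured neighbourhood.\<close>

definition mero_invertible :: "complex \<Rightarrow> (complex \<Rightarrow> complex mat) \<Rightarrow> bool" where
  "mero_invertible l0 M \<longleftrightarrow> (\<forall>\<^sub>F z in at l0. det (M z) \<noteq> 0)"

end

theory Submission imports Defs begin

no_notation vec_nth (infixl "$" 90)


definition dvdz :: "complex \<Rightarrow> nat \<Rightarrow> (complex \<Rightarrow> complex) \<Rightarrow> bool" where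
  "dvdz l0 k f \<longleftrightarrow> (\<exists>g. g analytic_on {l0} \<and> (\<forall>\<^sub>F z in nhds l0. f z = (z - l0)^k * g z))"

definition remv :: "complex \<Rightarrow> (complex \<Rightarrow> complex) \<Rightarrow> bool" where
  "remv l0 f \<longleftrightarrow> (\<exists>g. g analytic_on {l0} \<and> (\<forall>\<^sub>F z in at l0. f z = g z))"

lemma dvdz_mono: assumes "dvdz l0 k f" "k' \<le> k" shows "dvdz l0 k' f"
proof -
  from assms(1) obtain g where g: "g analytic_on {l0}" "\<forall>\<^sub>F z in nhds l0. f z = (z - l0)^k * g z"
    unfolding dvdz_def by blast
  have "\<forall>\<^sub>F z in nhds l0. f z = (z - l0)^k' * ((z-l0)^(k-k') * g z)"
    using g(2) by eventually_elim (use assms(2) in \<open>simp add: power_add[symmetric] mult.assoc[symmetric]\<close>)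
  moreover have "(\<lambda>z. (z-l0)^(k-k') * g z) analytic_on {l0}" using g(1) by (intro analytic_intros)
  ultimately show ?thesis unfolding dvdz_def by blast
qed

lemma dvdz_cong: assumes "dvdz l0 k f" "\<forall>\<^sub>F z in nhds l0. f z = f' z" shows "dvdz l0 k f'"
proof -
  from assms(1) obtain g where g: "g analytic_on {l0}" "\<forall>\<^sub>F z in nhds l0. f z = (z - l0)^k * g z"
    unfolding dvdz_def by blast
  have "\<forall>\<^sub>F z in nhds l0. f' z = (z - l0)^k * g z" using g(2) assms(2) by eventually_elim simp
  thus ?thesis using g(1) unfolding dvdz_def by blast
qed

lemma dvdz_add: assumes "dvdz l0 k f" "dvdz l0 k f'" shows "dvdz l0 k (\<lambda>z. f z + f' z)"
proof -
  from assms(1) obtain g where g: "g analytic_on {l0}" "\<forall>\<^sub>F z in nhds l0. f z = (z - l0)^k * g z"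
    unfolding dvdz_def by blast
  from assms(2) obtain g' where g': "g' analytic_on {l0}" "\<forall>\<^sub>F z in nhds l0. f' z = (z - l0)^k * g' z"
    unfolding dvdz_def by blast
  have "\<forall>\<^sub>F z in nhds l0. f z + f' z = (z - l0)^k * (g z + g' z)" using g(2) g'(2)
    by eventually_elim (simp add: distrib_left)
  moreover have "(\<lambda>z. g z + g' z) analytic_on {l0}" using g(1) g'(1) by (intro analytic_intros)
  ultimately show ?thesis unfolding dvdz_def by blast
qed

lemma dvdz_zero: "dvdz l0 k (\<lambda>z. 0)"
  unfolding dvdz_def by (rule exI[of _ "\<lambda>z. 0"]) (auto intro: analytic_intros)

lemma dvdz_sum: assumes "finite I" "\<And>i. i \<in> I \<Longrightarrow> dvdz l0 k (f i)" shows "dvdz l0 k (\<lambda>z. \<Sum>i\<in>I. f i z)"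
  using assms proof (induction I rule: finite_induct)
  case empty thus ?case by (simp add: dvdz_zero)
next
  case (insert x F) thus ?case by (simp add: dvdz_add)
qed

lemma dvdz_mult: assumes "a analytic_on {l0}" "dvdz l0 k f" shows "dvdz l0 k (\<lambda>z. a z * f z)"
proof -
  from assms(2) obtain g where g: "g analytic_on {l0}" "\<forall>\<^sub>F z in nhds l0. f z = (z - l0)^k * g z"
    unfolding dvdz_def by blast
  have "\<forall>\<^sub>F z in nhds l0. a z * f z = (z - l0)^k * (a z * g z)" using g(2)
    by eventually_elim (simp add: algebra_simps)
  moreover have "(\<lambda>z. a z * g z) analytic_on {l0}" using g(1) assms(1) by (intro analytic_intros)
  ultimately show ?thesis unfolding dvdz_def by blast
qed

lemma analytic_eq_at: assumes "f analytic_on {l0}" "g analytic_on {l0}" "\<forall>\<^sub>F z in at l0. f z = g z"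
  shows "f l0 = g l0"
proof -
  have "(f \<longlongrightarrow> f l0) (at l0)" using analytic_at_imp_isCont[OF assms(1)] isCont_def by blast
  moreover have "(g \<longlongrightarrow> g l0) (at l0)" using analytic_at_imp_isCont[OF assms(2)] isCont_def by blast
  hence "(f \<longlongrightarrow> g l0) (at l0)" using assms(3) tendsto_cong by (metis (mono_tags, lifting))
  ultimately show ?thesis using tendsto_unique[OF at_neq_bot] by blast
qed

lemma dvdz_zero_at: assumes "dvdz l0 (Suc k) (\<lambda>z. (z - l0)^k * g z)" "g analytic_on {l0}"
  shows "g l0 = 0"
proof -
  from assms(1) obtain h where h: "h analytic_on {l0}" "\<forall>\<^sub>F z in nhds l0. (z - l0)^k * g z = (z - l0)^(Suc k) * h z"
    unfolding dvdz_def by blast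
  have "\<forall>\<^sub>F z in at l0. (z - l0)^k * g z = (z - l0)^(Suc k) * h z"
    using h(2) by (rule eventually_at_filter[THEN iffD2, OF eventually_mono]) blast
  hence "\<forall>\<^sub>F z in at l0. g z = (z - l0) * h z"
  proof (rule eventually_mono[OF eventually_conj[OF _ eventually_neq_at_within[of l0 l0 UNIV]]])
    fix z assume "(z - l0)^k * g z = (z - l0)^(Suc k) * h z \<and> z \<noteq> l0"
    hence "(z - l0)^k * g z = (z - l0)^k * ((z - l0) * h z)" "(z - l0)^k \<noteq> 0" by (auto simp: mult_ac)
    thus "g z = (z - l0) * h z" by (metis mult_left_cancel)
  qed
  moreover have "(\<lambda>z. (z - l0) * h z) analytic_on {l0}" using h(1) by (intro analytic_intros)
  ultimately have "g l0 = (l0 - l0) * h l0" using analytic_eq_at[OF assms(2)] by blast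
  thus ?thesis by simp
qed

lemma dvdz_analytic: assumes "f analytic_on {l0}" shows "dvdz l0 0 f"
  unfolding dvdz_def using assms by auto

lemma dvdz_imp_remv: assumes "dvdz l0 k f" shows "remv l0 f"
proof -
  from assms obtain g where g: "g analytic_on {l0}" "\<forall>\<^sub>F z in nhds l0. f z = (z - l0)^k * g z"
    unfolding dvdz_def by blast
  have "(\<lambda>z. (z - l0)^k * g z) analytic_on {l0}" using g(1) by (intro analytic_intros)
  moreover have "\<forall>\<^sub>F z in at l0. f z = (z - l0)^k * g z"
    using g(2) by (rule eventually_at_filter[THEN iffD2, OF eventually_mono]) blast
  ultimately show ?thesis unfolding remv_def by blast
qed

lemma remv_analytic: "f analytic_on {l0} \<Longrightarrow> remv l0 f"
  unfolding remv_def by auto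

lemma remv_cong: assumes "remv l0 f" "\<forall>\<^sub>F z in at l0. f z = f' z" shows "remv l0 f'"
proof -
  from assms(1) obtain g where g: "g analytic_on {l0}" "\<forall>\<^sub>F z in at l0. f z = g z"
    unfolding remv_def by blast
  have "\<forall>\<^sub>F z in at l0. f' z = g z" using g(2) assms(2) by eventually_elim simp
  thus ?thesis using g(1) unfolding remv_def by blast
qed

lemma remv_add: assumes "remv l0 f" "remv l0 f'" shows "remv l0 (\<lambda>z. f z + f' z)"
proof -
  from assms(1) obtain g where g: "g analytic_on {l0}" "\<forall>\<^sub>F z in at l0. f z = g z"
    unfolding remv_def by blast
  from assms(2) obtain g' where g': "g' analytic_on {l0}" "\<forall>\<^sub>F z in at l0. f' z = g' z"
    unfolding remv_def by blast
  have "\<forall>\<^sub>F z in at l0. f z + f' z = g z + g' z" using g(2) g'(2) by eventually_elim simp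
  moreover have "(\<lambda>z. g z + g' z) analytic_on {l0}" using g(1) g'(1) by (intro analytic_intros)
  ultimately show ?thesis unfolding remv_def by blast
qed

lemma remv_mult: assumes "a analytic_on {l0}" "remv l0 f" shows "remv l0 (\<lambda>z. f z * a z)"
proof -
  from assms(2) obtain g where g: "g analytic_on {l0}" "\<forall>\<^sub>F z in at l0. f z = g z"
    unfolding remv_def by blast
  have "\<forall>\<^sub>F z in at l0. f z * a z = g z * a z" using g(2) by eventually_elim simp
  moreover have "(\<lambda>z. g z * a z) analytic_on {l0}" using g(1) assms(1) by (intro analytic_intros)
  ultimately show ?thesis unfolding remv_def by blast
qed

lemma remv_uminus: assumes "remv l0 f" shows "remv l0 (\<lambda>z. - f z)"
proof -
  from assms(1) obtain g where g: "g analytic_on {l0}" "\<forall>\<^sub>F z in at l0. f z = g z"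
    unfolding remv_def by blast
  have "\<forall>\<^sub>F z in at l0. - f z = - g z" using g(2) by eventually_elim simp
  moreover have "(\<lambda>z. - g z) analytic_on {l0}" using g(1) by (intro analytic_intros)
  ultimately show ?thesis unfolding remv_def by blast
qed

lemma remv_sum: assumes "finite I" "\<And>i. i \<in> I \<Longrightarrow> remv l0 (f i)" shows "remv l0 (\<lambda>z. \<Sum>i\<in>I. f i z)"
  using assms proof (induction I rule: finite_induct)
  case empty thus ?case by (simp add: remv_analytic analytic_on_const)
next
  case (insert x F) thus ?case by (simp add: remv_add)
qed

lemma ana_det: assumes "\<And>z. M z \<in> carrier_mat k k" "\<And>i j. i < k \<Longrightarrow> j < k \<Longrightarrow> (\<lambda>z. M z $$ (i,j)) analytic_on {l0}"
  shows "(\<lambda>z. det (M z)) analytic_on {l0}"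
proof -
  have eq: "(\<lambda>z. det (M z)) = (\<lambda>z. \<Sum> p \<in> {p. p permutes {0 ..< k}}. signof p * (\<Prod> i = 0 ..< k. M z $$ (i, p i)))"
    using det_def'[OF assms(1)] by auto
  show ?thesis unfolding eq
    by (intro analytic_intros assms) (auto simp: permutes_in_image)
qed

lemma mero_congr_iff: "mero_congr l0 r c M1 M2 \<longleftrightarrow> (\<forall>i<r. \<forall>j<c. remv l0 (\<lambda>z. M2 z $$ (i,j) - M1 z $$ (i,j)))"
proof
  assume "mero_congr l0 r c M1 M2"
  then obtain e where e: "e > 0" and h: "\<forall>i<r. \<forall>j<c. \<exists>h. h holomorphic_on ball l0 e \<and>
       (\<forall>z\<in>ball l0 e - {l0}. M2 z $$ (i,j) - M1 z $$ (i,j) = h z)" unfolding mero_congr_def by blast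
  show "\<forall>i<r. \<forall>j<c. remv l0 (\<lambda>z. M2 z $$ (i,j) - M1 z $$ (i,j))"
  proof (intro allI impI)
    fix i j assume "i < r" "j < c"
    with h obtain h where h: "h holomorphic_on ball l0 e" "\<forall>z\<in>ball l0 e - {l0}. M2 z $$ (i,j) - M1 z $$ (i,j) = h z" by blast
    have "h analytic_on {l0}" using h(1) e by (intro holomorphic_on_imp_analytic_at) auto
    moreover have "\<forall>\<^sub>F z in at l0. M2 z $$ (i,j) - M1 z $$ (i,j) = h z"
      unfolding eventually_at using e h(2) by (intro exI[of _ e]) (auto simp: dist_commute)
    ultimately show "remv l0 (\<lambda>z. M2 z $$ (i,j) - M1 z $$ (i,j))" unfolding remv_def by blast
  qed
next
  assume A: "\<forall>i<r. \<forall>j<c. remv l0 (\<lambda>z. M2 z $$ (i,j) - M1 z $$ (i,j))"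
  let ?P = "\<lambda>e (i,j). \<exists>h. h holomorphic_on ball l0 e \<and>
       (\<forall>z\<in>ball l0 e - {l0}. M2 z $$ (i,j) - M1 z $$ (i,j) = h z)"
  have ev: "\<forall>\<^sub>F e in at_right (0::real). ?P e ij" if ij: "ij \<in> {..<r} \<times> {..<c}" for ij
  proof -
    obtain i j where ij': "ij = (i,j)" "i < r" "j < c" using ij by auto
    then obtain g where g: "g analytic_on {l0}" "\<forall>\<^sub>F z in at l0. M2 z $$ (i,j) - M1 z $$ (i,j) = g z"
      using A unfolding remv_def by blast
    from g(1) obtain e1 where e1: "e1 > 0" "g holomorphic_on ball l0 e1" unfolding analytic_at_ball by blast
    from g(2) obtain e2 where e2: "e2 > 0" "\<forall>z. z \<noteq> l0 \<and> dist z l0 < e2 \<longrightarrow> M2 z $$ (i,j) - M1 z $$ (i,j) = g z"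
      unfolding eventually_at by blast
    show ?thesis unfolding eventually_at_right_field ij'(1)
    proof (intro exI[of _ "min e1 e2"] conjI allI impI)
      fix e :: real assume "e > 0" "e < min e1 e2"
      show "?P e (i,j)"
        using e1 e2 \<open>e < min e1 e2\<close>
        by (auto intro!: exI[of _ g] holomorphic_on_subset[OF e1(2)] simp: dist_commute)
    qed (use e1 e2 in auto)
  qed
  have "\<forall>\<^sub>F e in at_right (0::real). e > 0 \<and> (\<forall>ij\<in>{..<r} \<times> {..<c}. ?P e ij)"
    by (intro eventually_conj eventually_ball_finite ballI ev) (auto simp: eventually_at_right_field intro: exI[of _ 1])
  from eventually_happens'[OF trivial_limit_at_right_real this] obtain e where
    "e > 0" "\<forall>ij\<in>{..<r} \<times> {..<c}. ?P e ij" by blast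
  thus "mero_congr l0 r c M1 M2" unfolding mero_congr_def by (intro exI[of _ e]) auto
qed



lemma downclosed_card: assumes "\<And>i j. i \<le> j \<Longrightarrow> j < n \<Longrightarrow> S j \<Longrightarrow> S i" "j < n"
  shows "j < card {i. i < n \<and> S i} \<longleftrightarrow> S j"
proof
  assume "S j"
  hence "{0..j} \<subseteq> {i. i < n \<and> S i}" using assms by auto
  from card_mono[OF _ this] show "j < card {i. i < n \<and> S i}" by auto
next
  assume j: "j < card {i. i < n \<and> S i}"
  show "S j"
  proof (rule ccontr)
    assume "\<not> S j"
    hence "{i. i < n \<and> S i} \<subseteq> {..<j}" using assms by (metis (mono_tags, lifting) le_less_linear mem_Collect_eq subsetI lessThan_iff)
    from card_mono[OF _ this] j show False by auto
  qed
qed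

lemma kernel_dim_zero_mat: "kernel.dim s (0\<^sub>m s s :: complex mat) = s"
proof -
  have "pivot_fun (0\<^sub>m s s :: complex mat) (\<lambda>_. s) s" by (rule pivot_funI) auto
  hence "row_echelon_form (0\<^sub>m s s :: complex mat)" unfolding row_echelon_form_def by auto
  from find_base_vectors(6)[OF this, of s s] have "kernel.dim s (0\<^sub>m s s :: complex mat) = s - card {i. i < s \<and> row (0\<^sub>m s s :: complex mat) i \<noteq> 0\<^sub>v s}" by auto
  also have "{i. i < s \<and> row (0\<^sub>m s s :: complex mat) i \<noteq> 0\<^sub>v s} = {}" by auto
  finally show ?thesis by simp
qed

lemma pm_kernel:
  fixes A B C P Q :: "complex mat" and m :: "nat \<Rightarrow> nat"
  assumes A: "A \<in> carrier_mat n n" and P: "P \<in> carrier_mat n n" and Q: "Q \<in> carrier_mat n n"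
    and B: "B \<in> carrier_mat n n" and C: "C \<in> carrier_mat n n"
    and QP: "Q * P = 1\<^sub>m n" and BC: "B * C = 1\<^sub>m n"
    and D: "P * A * B = diag_fun n (\<lambda>i. 0 ^ (m i))"
    and mono: "\<forall>i j. i \<le> j \<longrightarrow> j < n \<longrightarrow> m j \<le> m i"
  shows "kernel_dim A = card {j. j < n \<and> 0 < m j}"
proof -
  define s where "s = card {j. j < n \<and> 0 < m j}"
  have sn: "s \<le> n" unfolding s_def by (rule order.trans[OF card_mono[of "{..<n}"]]) auto
  have sj: "j < s \<longleftrightarrow> 0 < m j" if "j < n" for j
    unfolding s_def by (rule downclosed_card[OF _ that]) (use mono in force)
  have PA: "P * A \<in> carrier_mat n n" using P A by auto
  have "kernel_dim A = kernel.dim n A" unfolding kernel_dim_def using A by simp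
  also have "\<dots> = kernel.dim n (P * A)" using mat_kernel_mult_eq[OF A P Q QP] by simp
  also have "\<dots> = kernel.dim n (P * A * B)" using mat_kernel_dim_mult_eq_right[OF PA B C BC] by simp
  also have "P * A * B = four_block_mat (0\<^sub>m s s) (0\<^sub>m s (n-s)) (0\<^sub>m (n-s) s) (1\<^sub>m (n-s))"
    unfolding D
  proof (rule eq_matI)
    fix i j assume ij: "i < dim_row (four_block_mat (0\<^sub>m s s) (0\<^sub>m s (n-s)) (0\<^sub>m (n-s) s) (1\<^sub>m (n-s)) :: complex mat)"
      "j < dim_col (four_block_mat (0\<^sub>m s s) (0\<^sub>m s (n-s)) (0\<^sub>m (n-s) s) (1\<^sub>m (n-s)) :: complex mat)"
    hence ij': "i < n" "j < n" using sn by auto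
    show "diag_fun n (\<lambda>i. 0 ^ m i) $$ (i, j) = four_block_mat (0\<^sub>m s s) (0\<^sub>m s (n-s)) (0\<^sub>m (n-s) s) (1\<^sub>m (n-s)) $$ (i, j)"
      using ij' sj[OF ij'(1)] sn unfolding diag_fun_def by (auto simp: index_mat_four_block)
  qed (use sn in \<open>auto simp: diag_fun_def\<close>)
  also have "kernel.dim n \<dots> = kernel.dim (s + (n-s)) \<dots>" using sn by simp
  also have "\<dots> = kernel.dim s (0\<^sub>m s s :: complex mat) + kernel.dim (n-s) (1\<^sub>m (n-s) :: complex mat)"
    by (rule kernel_four_block_0_mat) auto
  also have "\<dots> = s" using kernel_dim_zero_mat kernel_one_mat(1) by simp
  finally show ?thesis unfolding s_def .
qed



lemma mat_holo_ana: assumes "mat_holo S a b M" "ball l0 e \<subseteq> S" "e > 0" "i < a" "j < b"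
  shows "(\<lambda>z. M z $$ (i,j)) analytic_on {l0}"
proof -
  have "(\<lambda>z. M z $$ (i,j)) holomorphic_on ball l0 e"
    using assms unfolding mat_holo_def by (meson holomorphic_on_subset)
  thus ?thesis using assms(3) by (intro holomorphic_on_imp_analytic_at) auto
qed

lemma mult_entry: assumes "A \<in> carrier_mat a n" "B \<in> carrier_mat n b" "i < a" "j < b"
  shows "(A * B) $$ (i,j) = (\<Sum>k<n. A $$ (i,k) * B $$ (k,j))"
  using assms by (auto simp: scalar_prod_def lessThan_atLeast0 intro!: sum.cong)

lemma mult_vec_entry: fixes A :: "'a::comm_semiring_0 mat" assumes "A \<in> carrier_mat a n" "v \<in> carrier_vec n" "i < a"
  shows "(A *\<^sub>v v) $ i = (\<Sum>k<n. A $$ (i,k) * v $ k)"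
  using assms by (auto simp: scalar_prod_def lessThan_atLeast0 intro!: sum.cong)

lemma vzo_dvdz: fixes f :: "complex \<Rightarrow> complex vec" assumes "enat k \<le> vec_zero_order l0 n f" "(\<lambda>z. f z $ i) analytic_on {l0}" "i < n"
  shows "dvdz l0 k (\<lambda>z. f z $ i)"
proof (cases k)
  case 0 thus ?thesis using dvdz_analytic[OF assms(2)] by simp
next
  case (Suc k1)
  have "enat k1 < vec_zero_order l0 n f" using assms(1) Suc
    by (metis Suc_ile_eq)
  then obtain x where x: "x \<in> {enat k | k. \<exists>e>0. \<exists>h. vec_holo (ball l0 e) n h \<and>
       (\<forall>z\<in>ball l0 e. f z = (z - l0)^k \<cdot>\<^sub>v h z)}" "enat k1 < x"
    unfolding vec_zero_order_def less_Sup_iff by blast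
  then obtain k' e h where k': "x = enat k'" "e > 0" "vec_holo (ball l0 e) n h"
    "\<forall>z\<in>ball l0 e. f z = (z - l0)^k' \<cdot>\<^sub>v h z" by blast
  have kk: "k \<le> k'" using x(2) k'(1) Suc by auto
  have hi: "(\<lambda>z. h z $ i) analytic_on {l0}"
    using k'(2,3) assms(3) unfolding vec_holo_def by (intro holomorphic_on_imp_analytic_at) auto
  have "\<forall>\<^sub>F z in nhds l0. f z $ i = (z - l0)^k' * h z $ i"
  proof -
    have "\<forall>\<^sub>F z in nhds l0. z \<in> ball l0 e" using k'(2) by (intro eventually_nhds_in_open) auto
    thus ?thesis
    proof eventually_elim
      case (elim z)
      have "h z \<in> carrier_vec n" using k'(3) unfolding vec_holo_def by auto
      thus ?case using k'(4) elim assms(3) by auto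
    qed
  qed
  hence "dvdz l0 k' (\<lambda>z. f z $ i)" using hi unfolding dvdz_def by blast
  thus ?thesis using dvdz_mono kk by blast
qed

lemma mat_holo_transpose: assumes "mat_holo S a b M" shows "mat_holo S b a (\<lambda>z. transpose_mat (M z))"
  unfolding mat_holo_def
proof (intro conjI allI impI)
  fix z show "transpose_mat (M z) \<in> carrier_mat b a" using assms unfolding mat_holo_def by auto
next
  fix i j assume ij: "i < b" "j < a"
  have "(\<lambda>z. transpose_mat (M z) $$ (i,j)) = (\<lambda>z. M z $$ (j,i))"
  proof (rule ext)
    fix z have "M z \<in> carrier_mat a b" using assms unfolding mat_holo_def by auto
    thus "transpose_mat (M z) $$ (i,j) = M z $$ (j,i)" using ij by auto
  qed
  thus "(\<lambda>z. transpose_mat (M z) $$ (i,j)) holomorphic_on S" using assms ij unfolding mat_holo_def by auto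
qed

lemma left_to_right:
  assumes lc: "left_canonical \<Omega> l0 n T m V" and kd: "kernel_dim (transpose_mat (T l0)) = kernel_dim (T l0)"
    and TH: "mat_holo \<Omega> n n T"
  shows "right_canonical \<Omega> l0 n (\<lambda>z. transpose_mat (T z)) m (\<lambda>z. transpose_mat (V z))"
proof -
  define r where "r = kernel_dim (T l0)"
  have V: "mat_holo \<Omega> r n V" using lc unfolding left_canonical_def r_def Let_def by auto
  have Vc: "V z \<in> carrier_mat r n" for z using V unfolding mat_holo_def by auto
  have colrow: "(\<lambda>z. col (transpose_mat (V z)) i) = (\<lambda>z. row (V z) i)" if "i < r" for i
  proof (rule ext)
    fix z have "V z \<in> carrier_mat r n" by (rule Vc)
    thus "col (transpose_mat (V z)) i = row (V z) i" using that by simp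
  qed
  from lc have L: "\<forall>i<r. left_root_function \<Omega> l0 n T (\<lambda>z. row (V z) i)"
    "\<forall>c\<in>carrier_vec r. transpose_mat (V l0) *\<^sub>v c = 0\<^sub>v n \<longrightarrow> c = 0\<^sub>v r"
    "(\<Sum>i<r. left_root_mult l0 n T (\<lambda>z. row (V z) i)) = enat (\<Sum>i<r. m i)"
    "\<forall>i j. i \<le> j \<longrightarrow> j < r \<longrightarrow> left_root_mult l0 n T (\<lambda>z. row (V z) j) \<le> left_root_mult l0 n T (\<lambda>z. row (V z) i)"
    unfolding left_canonical_def Let_def r_def by auto
  have eqs: "\<And>y. root_function \<Omega> l0 n (\<lambda>z. transpose_mat (T z)) y = left_root_function \<Omega> l0 n T y"
    "\<And>y. root_mult l0 n (\<lambda>z. transpose_mat (T z)) y = left_root_mult l0 n T y"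
    unfolding root_function_def left_root_function_def root_mult_def left_root_mult_def by simp_all
  show ?thesis unfolding right_canonical_def Let_def kd r_def[symmetric] eqs
  proof (intro conjI)
    show "mat_holo \<Omega> n r (\<lambda>z. transpose_mat (V z))" by (rule mat_holo_transpose[OF V])
    show "\<forall>i<r. left_root_function \<Omega> l0 n T (\<lambda>z. col (transpose_mat (V z)) i)" using L(1) colrow by simp
    show "\<forall>c\<in>carrier_vec r. transpose_mat (V l0) *\<^sub>v c = 0\<^sub>v n \<longrightarrow> c = 0\<^sub>v r" using L(2) .
    have "(\<Sum>i<r. left_root_mult l0 n T (\<lambda>z. col (transpose_mat (V z)) i)) = (\<Sum>i<r. left_root_mult l0 n T (\<lambda>z. row (V z) i))"
      by (rule sum.cong) (simp_all add: colrow)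
    thus "(\<Sum>i<r. left_root_mult l0 n T (\<lambda>z. col (transpose_mat (V z)) i)) = enat (\<Sum>i<r. m i)" using L(3) by simp
    show "\<forall>i j. i \<le> j \<longrightarrow> j < r \<longrightarrow> left_root_mult l0 n T (\<lambda>z. col (transpose_mat (V z)) j) \<le> left_root_mult l0 n T (\<lambda>z. col (transpose_mat (V z)) i)"
      using L(4) colrow by (metis le_less_trans)
  qed
qed



lemma enat_sum: "(\<Sum>i\<in>A. enat (f i)) = enat (\<Sum>i\<in>A. f i)"
  by (induction A rule: infinite_finite_induct) (auto simp: zero_enat_def)

lemma diag_mult_entry: assumes "B \<in> carrier_mat n b" "j < n" "q < b"
  shows "(diag_fun n d * B) $$ (j,q) = d j * B $$ (j,q)"
proof -
  have "(diag_fun n d * B) $$ (j,q) = (\<Sum>k<n. diag_fun n d $$ (j,k) * B $$ (k,q))"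
    by (rule mult_entry[OF _ assms(1)]) (use assms in \<open>auto simp: diag_fun_def\<close>)
  also have "\<dots> = (\<Sum>k<n. if k = j then d j * B $$ (k,q) else 0)"
    by (rule sum.cong) (use assms in \<open>auto simp: diag_fun_def\<close>)
  also have "\<dots> = d j * B $$ (j,q)" using assms by simp
  finally show ?thesis .
qed

lemma det_zero_last_row: fixes B :: "complex mat"
  assumes B: "B \<in> carrier_mat (Suc q) (Suc q)" and z: "\<And>k. k < Suc q \<Longrightarrow> B $$ (q,k) = 0"
  shows "det B = 0"
proof -
  have Bt: "transpose_mat B \<in> carrier_mat (Suc q) (Suc q)" using B by auto
  have "det B = det (transpose_mat B)" using det_transpose[OF B] by simp
  also have "\<dots> = (\<Sum>i<Suc q. transpose_mat B $$ (i,q) * cofactor (transpose_mat B) i q)"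
    by (rule laplace_expansion_column[OF Bt]) simp
  also have "\<dots> = 0" using B z by (intro sum.neutral) auto
  finally show ?thesis .
qed

lemma core_right:
  fixes T UL UR WL WR Y :: "complex \<Rightarrow> complex mat" and m :: "nat \<Rightarrow> nat"
  assumes e: "e > 0" "ball l0 e \<subseteq> \<Omega>"
    and TH: "mat_holo \<Omega> n n T"
    and hUL: "mat_holo (ball l0 e) n n UL" and hUR: "mat_holo (ball l0 e) n n UR"
    and hWL: "mat_holo (ball l0 e) n n WL" and hWR: "mat_holo (ball l0 e) n n WR"
    and inv: "\<forall>z\<in>ball l0 e. UL z * WL z = 1\<^sub>m n \<and> WL z * UL z = 1\<^sub>m n \<and> UR z * WR z = 1\<^sub>m n \<and> WR z * UR z = 1\<^sub>m n"
    and D: "\<forall>z\<in>ball l0 e. UL z * T z * UR z = diag_fun n (\<lambda>i. (z - l0) ^ m i)"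
    and mono: "\<forall>i j. i \<le> j \<longrightarrow> j < n \<longrightarrow> m j \<le> m i"
    and rc: "right_canonical \<Omega> l0 n T m Y"
    and r: "r = kernel_dim (T l0)"
  shows "\<forall>q<r. \<forall>j<n. dvdz l0 (m q) (\<lambda>z. (z - l0)^(m j) * (WR z * Y z) $$ (j,q))"
    and "\<forall>c\<in>carrier_vec r. (\<forall>j<r. (\<Sum>q<r. (WR l0 * Y l0) $$ (j,q) * c $ q) = 0) \<longrightarrow> c = 0\<^sub>v r"
    and "\<forall>j<n. (j < r \<longleftrightarrow> 0 < m j)" and "r \<le> n"
proof -
  have l0: "l0 \<in> ball l0 e" using e by simp
  have Tc: "\<And>z. T z \<in> carrier_mat n n" using TH unfolding mat_holo_def by auto
  have ULc: "\<And>z. UL z \<in> carrier_mat n n" using hUL unfolding mat_holo_def by auto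
  have URc: "\<And>z. UR z \<in> carrier_mat n n" using hUR unfolding mat_holo_def by auto
  have WLc: "\<And>z. WL z \<in> carrier_mat n n" using hWL unfolding mat_holo_def by auto
  have WRc: "\<And>z. WR z \<in> carrier_mat n n" using hWR unfolding mat_holo_def by auto
  have YH: "mat_holo \<Omega> n r Y" and R1: "\<forall>i<r. root_function \<Omega> l0 n T (\<lambda>z. col (Y z) i)"
    and R2: "\<forall>c\<in>carrier_vec r. Y l0 *\<^sub>v c = 0\<^sub>v n \<longrightarrow> c = 0\<^sub>v r"
    and R3: "(\<Sum>i<r. root_mult l0 n T (\<lambda>z. col (Y z) i)) = enat (\<Sum>i<r. m i)"
    and R4: "\<forall>i j. i \<le> j \<longrightarrow> j < r \<longrightarrow> root_mult l0 n T (\<lambda>z. col (Y z) j) \<le> root_mult l0 n T (\<lambda>z. col (Y z) i)"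
    using rc unfolding right_canonical_def Let_def r[symmetric] by auto
  have Yc: "\<And>z. Y z \<in> carrier_mat n r" using YH unfolding mat_holo_def by auto
  have dims[simp]: "\<And>z. dim_row (T z) = n" "\<And>z. dim_col (T z) = n" "\<And>z. dim_row (UL z) = n" "\<And>z. dim_col (UL z) = n"
    "\<And>z. dim_row (UR z) = n" "\<And>z. dim_col (UR z) = n" "\<And>z. dim_row (WL z) = n" "\<And>z. dim_col (WL z) = n"
    "\<And>z. dim_row (WR z) = n" "\<And>z. dim_col (WR z) = n" "\<And>z. dim_row (Y z) = n" "\<And>z. dim_col (Y z) = r"
    using carrier_matD[OF Tc] carrier_matD[OF ULc] carrier_matD[OF URc] carrier_matD[OF WLc] carrier_matD[OF WRc] carrier_matD[OF Yc] by auto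
  have cprod[simp]: "\<And>z. UL z * T z \<in> carrier_mat n n" "\<And>z. WR z * Y z \<in> carrier_mat n r" "\<And>z. T z * Y z \<in> carrier_mat n r"
    "\<And>z. UL z \<in> carrier_mat n n" "\<And>z. UR z \<in> carrier_mat n n" "\<And>z. WR z \<in> carrier_mat n n" "\<And>z. WL z \<in> carrier_mat n n"
    "\<And>z. T z \<in> carrier_mat n n" "\<And>z. Y z \<in> carrier_mat n r"
    using Tc ULc URc WLc WRc Yc by (auto intro: mult_carrier_mat)
  have rcard: "r = card {j. j < n \<and> 0 < m j}" unfolding r
  proof (rule pm_kernel[OF Tc[of l0] ULc[of l0] WLc[of l0] URc[of l0] WRc[of l0]])
    show "WL l0 * UL l0 = 1\<^sub>m n" "UR l0 * WR l0 = 1\<^sub>m n" using inv l0 by auto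
    show "UL l0 * T l0 * UR l0 = diag_fun n (\<lambda>i. 0 ^ m i)" using D l0 by auto
  qed (rule mono)
  show rn: "r \<le> n" unfolding rcard by (rule order.trans[OF card_mono[of "{..<n}"]]) auto
  from rcard have sj: "\<forall>j<n. (j < r \<longleftrightarrow> 0 < m j)"
    using downclosed_card[of n "\<lambda>j. 0 < m j"] mono by (metis le_less_trans less_le_trans)
  show "\<forall>j<n. (j < r \<longleftrightarrow> 0 < m j)" by (rule sj)
  have aT: "\<And>i j. i < n \<Longrightarrow> j < n \<Longrightarrow> (\<lambda>z. T z $$ (i,j)) analytic_on {l0}"
    using mat_holo_ana[OF TH e(2) e(1)] by blast
  have aY: "\<And>i j. i < n \<Longrightarrow> j < r \<Longrightarrow> (\<lambda>z. Y z $$ (i,j)) analytic_on {l0}"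
    using mat_holo_ana[OF YH e(2) e(1)] by blast
  have aUL: "\<And>i j. i < n \<Longrightarrow> j < n \<Longrightarrow> (\<lambda>z. UL z $$ (i,j)) analytic_on {l0}"
    using mat_holo_ana[OF hUL subset_refl e(1)] by blast
  have aWR: "\<And>i j. i < n \<Longrightarrow> j < n \<Longrightarrow> (\<lambda>z. WR z $$ (i,j)) analytic_on {l0}"
    using mat_holo_ana[OF hWR subset_refl e(1)] by blast
  have aYp: "(\<lambda>z. (WR z * Y z) $$ (j,q)) analytic_on {l0}" if "j < n" "q < r" for j q
  proof -
    have eq: "(\<lambda>z. (WR z * Y z) $$ (j,q)) = (\<lambda>z. \<Sum>k<n. WR z $$ (j,k) * Y z $$ (k,q))"
      using mult_entry[OF WRc Yc that] by auto
    show ?thesis unfolding eq using that by (intro analytic_intros aWR aY) auto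
  qed
  have Tyi: "(T z *\<^sub>v col (Y z) q) $ i = (\<Sum>k<n. T z $$ (i,k) * Y z $$ (k,q))" if "q < r" "i < n" for z q i
  proof -
    have "(T z *\<^sub>v col (Y z) q) $ i = (\<Sum>k<n. T z $$ (i,k) * col (Y z) q $ k)"
      by (rule mult_vec_entry[of _ n n]) (use Yc[of z] that in auto)
    also have "\<dots> = (\<Sum>k<n. T z $$ (i,k) * Y z $$ (k,q))"
      by (rule sum.cong) (use Yc[of z] that in auto)
    finally show ?thesis .
  qed
  have aTy: "(\<lambda>z. (T z *\<^sub>v col (Y z) q) $ i) analytic_on {l0}" if "q < r" "i < n" for q i
    unfolding Tyi[OF that] using that by (intro analytic_intros aT aY) auto
  have evb: "\<forall>\<^sub>F z in nhds l0. z \<in> ball l0 e" using e by (intro eventually_nhds_in_open) auto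
  have key: "(z - l0)^(m j) * (WR z * Y z) $$ (j,q) = (\<Sum>i<n. UL z $$ (j,i) * (T z *\<^sub>v col (Y z) q) $ i)"
    if z: "z \<in> ball l0 e" and j: "j < n" and q: "q < r" for z j q
  proof -
    have a1: "UL z * T z * UR z * (WR z * Y z) = UL z * T z * (UR z * (WR z * Y z))"
      by (rule assoc_mult_mat[of _ n n _ n _ r]) (auto)
    have a2: "UR z * (WR z * Y z) = UR z * WR z * Y z"
      by (rule assoc_mult_mat[symmetric, of _ n n _ n _ r]) (auto)
    have a3: "UR z * WR z * Y z = Y z" using inv z left_mult_one_mat[OF Yc[of z]] by simp
    have a4: "UL z * T z * Y z = UL z * (T z * Y z)"
      by (rule assoc_mult_mat[of _ n n _ n _ r]) (auto)
    have M: "diag_fun n (\<lambda>i. (z - l0) ^ m i) * (WR z * Y z) = UL z * (T z * Y z)"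
      using D z a1 a2 a3 a4 by metis
    have "(z - l0)^(m j) * (WR z * Y z) $$ (j,q) = (diag_fun n (\<lambda>i. (z - l0) ^ m i) * (WR z * Y z)) $$ (j,q)"
      by (rule diag_mult_entry[symmetric]) (use j q in \<open>auto\<close>)
    also have "\<dots> = (UL z * (T z * Y z)) $$ (j,q)" unfolding M ..
    also have "\<dots> = (\<Sum>i<n. UL z $$ (j,i) * (T z * Y z) $$ (i,q))"
      by (rule mult_entry[OF ULc _ j q]) (auto)
    also have "\<dots> = (\<Sum>i<n. UL z $$ (j,i) * (T z *\<^sub>v col (Y z) q) $ i)"
      by (rule sum.cong) (use q in auto)
    finally show ?thesis .
  qed
  define nu where "nu q = root_mult l0 n T (\<lambda>z. col (Y z) q)" for q
  have fin: "nu q \<noteq> \<infinity>" if "q < r" for q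
  proof
    assume inf: "nu q = \<infinity>"
    have "(\<Sum>i<r. nu i) = nu q + (\<Sum>i\<in>{..<r} - {q}. nu i)"
      using sum.remove[of "{..<r}" q nu] that by simp
    also have "\<dots> = \<infinity>" using inf by simp
    finally show False using R3 unfolding nu_def by simp
  qed
  define a where "a q = the_enat (nu q)" for q
  have nua: "nu q = enat (a q)" if "q < r" for q using fin[OF that] unfolding a_def by auto
  have dv1: "dvdz l0 (a q) (\<lambda>z. (T z *\<^sub>v col (Y z) q) $ i)" if "q < r" "i < n" for q i
    by (rule vzo_dvdz[OF _ aTy[OF that] that(2)]) (use nua[OF that(1)] in \<open>simp add: nu_def root_mult_def\<close>)
  have dv2: "dvdz l0 (a q) (\<lambda>z. (z - l0)^(m j) * (WR z * Y z) $$ (j,q))" if "q < r" "j < n" for q j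
  proof (rule dvdz_cong)
    show "dvdz l0 (a q) (\<lambda>z. \<Sum>i<n. UL z $$ (j,i) * (T z *\<^sub>v col (Y z) q) $ i)"
      using that by (intro dvdz_sum dvdz_mult aUL dv1) auto
    show "\<forall>\<^sub>F z in nhds l0. (\<Sum>i<n. UL z $$ (j,i) * (T z *\<^sub>v col (Y z) q) $ i) = (z - l0)^(m j) * (WR z * Y z) $$ (j,q)"
      using evb by eventually_elim (use key that in auto)
  qed
  have amono: "a q \<le> a q'" if "q' \<le> q" "q < r" for q q'
    using R4 that nua[of q] nua[of q'] unfolding nu_def by fastforce
  have zl: "(WR l0 * Y l0) $$ (j,q) = 0" if "q < r" "j < n" "m j < a q" for q j
  proof -
    have "dvdz l0 (Suc (m j)) (\<lambda>z. (z - l0)^(m j) * (WR z * Y z) $$ (j,q))"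
      using dvdz_mono[OF dv2[OF that(1,2)]] that(3) by simp
    from dvdz_zero_at[OF this aYp[OF that(2,1)]] show ?thesis .
  qed
  have Yinj: "c = 0\<^sub>v r" if c: "c \<in> carrier_vec r" "(WR l0 * Y l0) *\<^sub>v c = 0\<^sub>v n" for c
  proof -
    have "Y l0 = UR l0 * WR l0 * Y l0" using inv l0 Yc by simp
    also have "\<dots> = UR l0 * (WR l0 * Y l0)"
      by (rule assoc_mult_mat[of _ n n _ n _ r]) (auto)
    finally have "Y l0 *\<^sub>v c = UR l0 *\<^sub>v ((WR l0 * Y l0) *\<^sub>v c)"
      using assoc_mult_mat_vec[of "UR l0" n n "WR l0 * Y l0" r c] URc WRc Yc c by auto
    also have "\<dots> = 0\<^sub>v n" unfolding c(2) by (intro eq_vecI) (auto simp: scalar_prod_def)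
    finally show ?thesis using R2 c by blast
  qed
  have ale: "a q \<le> m q" if q: "q < r" for q
  proof (rule ccontr)
    assume "\<not> a q \<le> m q"
    hence mq: "m q < a q" by simp
    let ?Yp = "WR l0 * Y l0"
    have zeros: "?Yp $$ (j,q') = 0" if "q' \<le> q" "q \<le> j" "j < n" for q' j
    proof (rule zl)
      show "q' < r" using that q by simp
      show "j < n" by fact
      have "m j \<le> m q" using mono that by blast
      thus "m j < a q'" using mq amono[OF that(1) q] by simp
    qed
    define Bm where "Bm = mat (Suc q) (Suc q) (\<lambda>(j,k). if j < q then ?Yp $$ (j,k) else 0)"
    have Bc: "Bm \<in> carrier_mat (Suc q) (Suc q)" unfolding Bm_def by simp
    have "det Bm = 0" by (rule det_zero_last_row[OF Bc]) (simp add: Bm_def)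
    then obtain v where v: "v \<in> carrier_vec (Suc q)" "v \<noteq> 0\<^sub>v (Suc q)" "Bm *\<^sub>v v = 0\<^sub>v (Suc q)"
      using det_0_iff_vec_prod_zero[OF Bc] by blast
    define c where "c = vec r (\<lambda>i. if i \<le> q then v $ i else 0)"
    have cc: "c \<in> carrier_vec r" unfolding c_def by simp
    have "?Yp *\<^sub>v c = 0\<^sub>v n"
    proof (rule eq_vecI)
      show "dim_vec (?Yp *\<^sub>v c) = dim_vec (0\<^sub>v n)" using WRc by simp
      fix j assume "j < dim_vec (0\<^sub>v n)"
      hence j: "j < n" by simp
      have "(?Yp *\<^sub>v c) $ j = (\<Sum>k<r. ?Yp $$ (j,k) * c $ k)"
        by (rule mult_vec_entry[OF _ cc j]) (use WRc Yc in auto)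
      also have "\<dots> = (\<Sum>k<Suc q. ?Yp $$ (j,k) * v $ k)"
        by (rule sum.mono_neutral_cong_right) (use q in \<open>auto simp: c_def\<close>)
      also have "\<dots> = 0"
      proof (cases "j < q")
        case True
        have "0 = (Bm *\<^sub>v v) $ j" using v(3) True by simp
        also have "\<dots> = (\<Sum>k<Suc q. Bm $$ (j,k) * v $ k)"
          by (rule mult_vec_entry[OF Bc v(1)]) (use True in simp)
        also have "\<dots> = (\<Sum>k<Suc q. ?Yp $$ (j,k) * v $ k)"
          by (rule sum.cong) (use True in \<open>auto simp: Bm_def\<close>)
        finally show ?thesis by simp
      next
        case False
        thus ?thesis using zeros j by (intro sum.neutral) auto
      qed
      finally show "(?Yp *\<^sub>v c) $ j = 0\<^sub>v n $ j" using j by simp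
    qed
    hence "c = 0\<^sub>v r" using Yinj cc by blast
    hence "v = 0\<^sub>v (Suc q)"
    proof -
      assume c0: "c = 0\<^sub>v r"
      show ?thesis
      proof (rule eq_vecI)
        fix i assume "i < dim_vec (0\<^sub>v (Suc q))"
        hence i: "i \<le> q" by simp
        have "v $ i = c $ i" using i q unfolding c_def by simp
        thus "v $ i = 0\<^sub>v (Suc q) $ i" using c0 i q by simp
      qed (use v(1) in simp)
    qed
    with v(2) show False by simp
  qed
  have aeq: "a q = m q" if q: "q < r" for q
  proof (rule ccontr)
    assume "a q \<noteq> m q"
    hence "a q < m q" using ale[OF q] by simp
    hence "(\<Sum>i<r. a i) < (\<Sum>i<r. m i)"
      using q ale by (intro sum_strict_mono_ex1) auto
    moreover have "enat (\<Sum>i<r. a i) = enat (\<Sum>i<r. m i)"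
    proof -
      have "enat (\<Sum>i<r. a i) = (\<Sum>i<r. enat (a i))" by (rule enat_sum[symmetric])
      also have "\<dots> = (\<Sum>i<r. nu i)" by (rule sum.cong) (simp_all add: nua)
      also have "\<dots> = enat (\<Sum>i<r. m i)" using R3 unfolding nu_def .
      finally show ?thesis .
    qed
    ultimately show False by simp
  qed
  show "\<forall>q<r. \<forall>j<n. dvdz l0 (m q) (\<lambda>z. (z - l0)^(m j) * (WR z * Y z) $$ (j,q))"
    using dv2 aeq by auto
  show "\<forall>c\<in>carrier_vec r. (\<forall>j<r. (\<Sum>q<r. (WR l0 * Y l0) $$ (j,q) * c $ q) = 0) \<longrightarrow> c = 0\<^sub>v r"
  proof (intro ballI impI)
    fix c :: "complex vec" assume c: "c \<in> carrier_vec r" and h: "\<forall>j<r. (\<Sum>q<r. (WR l0 * Y l0) $$ (j,q) * c $ q) = 0"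
    have "(WR l0 * Y l0) *\<^sub>v c = 0\<^sub>v n"
    proof (rule eq_vecI)
      show "dim_vec ((WR l0 * Y l0) *\<^sub>v c) = dim_vec (0\<^sub>v n)" using WRc by simp
      fix j assume "j < dim_vec (0\<^sub>v n)"
      hence j: "j < n" by simp
      have "((WR l0 * Y l0) *\<^sub>v c) $ j = (\<Sum>q<r. (WR l0 * Y l0) $$ (j,q) * c $ q)"
        by (rule mult_vec_entry[OF _ c j]) (use WRc Yc in auto)
      also have "\<dots> = 0"
      proof (cases "j < r")
        case True thus ?thesis using h by simp
      next
        case False
        hence "m j = 0" using sj j by simp
        have "(WR l0 * Y l0) $$ (j,q) = 0" if "q < r" for q
        proof (rule zl[OF that j])
          have "q < n" using that rn by simp
          hence "0 < m q" using sj that by simp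
          thus "m j < a q" using \<open>m j = 0\<close> aeq[OF that] by simp
        qed
        thus ?thesis by (intro sum.neutral) auto
      qed
      finally show "((WR l0 * Y l0) *\<^sub>v c) $ j = 0\<^sub>v n $ j" using j by simp
    qed
    thus "c = 0\<^sub>v r" using Yinj c by blast
  qed
qed


lemma mult_diag_entry: assumes "B \<in> carrier_mat a n" "j < a" "q < n"
  shows "(B * diag_fun n d) $$ (j,q) = B $$ (j,q) * d q"
proof -
  have "(B * diag_fun n d) $$ (j,q) = (\<Sum>k<n. B $$ (j,k) * diag_fun n d $$ (k,q))"
    by (rule mult_entry[OF assms(1)]) (use assms in \<open>auto simp: diag_fun_def\<close>)
  also have "\<dots> = (\<Sum>k<n. if k = q then B $$ (j,q) * d q else 0)"
    by (rule sum.cong) (use assms in \<open>auto simp: diag_fun_def\<close>)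
  also have "\<dots> = B $$ (j,q) * d q" using assms by simp
  finally show ?thesis .
qed

lemma det_diag_fun: "det (diag_fun n d) = (\<Prod>i<n. d i)"
proof -
  have "det (diag_fun n d) = prod_list (diag_mat (diag_fun n d))"
    by (rule det_upper_triangular) (auto simp: upper_triangular_def diag_fun_def)
  also have "\<dots> = (\<Prod>i<n. d i)"
  proof -
    have "diag_mat (diag_fun n d) = map d [0..<n]" unfolding diag_mat_def diag_fun_def by auto
    thus ?thesis using prod.distinct_set_conv_list[of "[0..<n]" d] by (simp add: lessThan_atLeast0)
  qed
  finally show ?thesis .
qed

lemma mat_inv_props: fixes A :: "complex mat"
  assumes A: "A \<in> carrier_mat n n" and d: "det A \<noteq> 0"
  shows "mat_inv A \<in> carrier_mat n n" "A * mat_inv A = 1\<^sub>m n" "mat_inv A * A = 1\<^sub>m n"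
proof -
  note adj = adj_mat[OF A]
  show c: "mat_inv A \<in> carrier_mat n n" unfolding mat_inv_def using adj(1) by simp
  have "A * mat_inv A = inverse (det A) \<cdot>\<^sub>m (A * adj_mat A)"
    unfolding mat_inv_def by (rule mult_smult_distrib[OF A adj(1)])
  also have "\<dots> = 1\<^sub>m n" unfolding adj(2) using d by (intro eq_matI) auto
  finally show "A * mat_inv A = 1\<^sub>m n" .
  have "mat_inv A * A = inverse (det A) \<cdot>\<^sub>m (adj_mat A * A)"
    unfolding mat_inv_def by (rule mult_smult_assoc_mat[OF adj(1) A])
  also have "\<dots> = 1\<^sub>m n" unfolding adj(3) using d by (intro eq_matI) auto
  finally show "mat_inv A * A = 1\<^sub>m n" .
qed

lemma mat_inv_unique: fixes A B :: "complex mat"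
  assumes A: "A \<in> carrier_mat n n" and B: "B \<in> carrier_mat n n" and AB: "A * B = 1\<^sub>m n" and d: "det A \<noteq> 0"
  shows "mat_inv A = B"
proof -
  note P = mat_inv_props[OF A d]
  have "mat_inv A = mat_inv A * (A * B)" using P(1) AB by simp
  also have "\<dots> = mat_inv A * A * B" using assoc_mult_mat[OF P(1) A B] by simp
  also have "\<dots> = B" using P(3) B by simp
  finally show ?thesis .
qed

lemma ana_mat_inv_entry:
  assumes M: "\<And>z. M z \<in> carrier_mat k k"
    and a: "\<And>i j. i < k \<Longrightarrow> j < k \<Longrightarrow> (\<lambda>z. M z $$ (i,j)) analytic_on {l0}"
    and d: "det (M l0) \<noteq> 0" and ij: "i < k" "j < k"
  shows "(\<lambda>z. mat_inv (M z) $$ (i,j)) analytic_on {l0}"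
proof -
  have eq: "mat_inv (M z) $$ (i,j) = inverse (det (M z)) * ((-1)^(j+i) * det (mat_delete (M z) j i))" for z
    unfolding mat_inv_def adj_mat_def cofactor_def using M[of z] ij by simp
  have ad: "(\<lambda>z. det (M z)) analytic_on {l0}" by (rule ana_det[OF M a])
  have am: "(\<lambda>z. det (mat_delete (M z) j i)) analytic_on {l0}"
  proof (rule ana_det)
    show "mat_delete (M z) j i \<in> carrier_mat (k-1) (k-1)" for z using mat_delete_carrier[OF M[of z]] .
    fix i' j' assume ij': "i' < k - 1" "j' < k - 1"
    have "(\<lambda>z. mat_delete (M z) j i $$ (i',j')) = (\<lambda>z. M z $$ (if i' < j then i' else Suc i', if j' < i then j' else Suc j'))"
    proof (rule ext)
      fix z have "M z \<in> carrier_mat k k" by (rule M)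
      thus "mat_delete (M z) j i $$ (i',j') = M z $$ (if i' < j then i' else Suc i', if j' < i then j' else Suc j')"
        using ij' unfolding mat_delete_def by auto
    qed
    thus "(\<lambda>z. mat_delete (M z) j i $$ (i',j')) analytic_on {l0}" using a ij' by auto
  qed
  show ?thesis unfolding eq using ad am d by (intro analytic_intros) auto
qed

lemma mat_holo_subset: "mat_holo S a b M \<Longrightarrow> S' \<subseteq> S \<Longrightarrow> mat_holo S' a b M"
  unfolding mat_holo_def using holomorphic_on_subset by blast

lemma diag_fun_carrier[simp]: "diag_fun n d \<in> carrier_mat n n" "dim_row (diag_fun n d) = n" "dim_col (diag_fun n d) = n"
  unfolding diag_fun_def by auto

lemma diag_fun_transpose[simp]: "transpose_mat (diag_fun n d) = diag_fun n d"
  unfolding diag_fun_def by (intro eq_matI) auto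


lemma nhds_to_at: "eventually P (nhds (x::complex)) \<Longrightarrow> eventually P (at x)"
  unfolding eventually_at_filter by (auto elim: eventually_mono)

lemma at_neq: "\<forall>\<^sub>F z in at (x::complex). z \<noteq> x"
  unfolding eventually_at_filter by simp

lemma tr3: fixes A B C :: "'a::comm_semiring_0 mat"
  assumes "A \<in> carrier_mat n n" "B \<in> carrier_mat n n" "C \<in> carrier_mat n n"
  shows "transpose_mat (A * B * C) = transpose_mat C * transpose_mat B * transpose_mat A"
proof -
  have "transpose_mat (A * B * C) = transpose_mat C * transpose_mat (A * B)"
    using assms by (intro transpose_mult) auto
  also have "transpose_mat (A * B) = transpose_mat B * transpose_mat A"
    using assms by (intro transpose_mult) auto
  finally show ?thesis using assms by (simp add: assoc_mult_mat[of _ n n _ n _ n])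
qed

lemma tr2: fixes A B :: "'a::comm_semiring_1 mat"
  assumes "A \<in> carrier_mat n n" "B \<in> carrier_mat n n" "A * B = 1\<^sub>m n"
  shows "transpose_mat B * transpose_mat A = 1\<^sub>m n"
  using transpose_mult[OF assms(1,2)] assms(3) by simp

lemma assoc5: fixes A B C E F :: "'a::comm_semiring_0 mat"
  assumes A: "A \<in> carrier_mat a n" and B: "B \<in> carrier_mat n n" and C: "C \<in> carrier_mat n n"
    and E: "E \<in> carrier_mat n n" and F: "F \<in> carrier_mat n b"
  shows "A * (B * C * E) * F = (A * B) * (C * (E * F))"
proof -
  have BC: "B * C \<in> carrier_mat n n" using B C by auto
  have 1: "A * (B * C * E) = A * (B * C) * E" using assoc_mult_mat[OF A BC E] by simp
  have 2: "A * (B * C) = A * B * C" using assoc_mult_mat[OF A B C] by simp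
  have AB: "A * B \<in> carrier_mat a n" using A B by auto
  have ABC: "A * B * C \<in> carrier_mat a n" using AB C by auto
  have 3: "A * B * C * E * F = A * B * C * (E * F)" using assoc_mult_mat[OF ABC E F] by simp
  have EF: "E * F \<in> carrier_mat n b" using E F by auto
  have 4: "A * B * C * (E * F) = A * B * (C * (E * F))" using assoc_mult_mat[OF AB C EF] by simp
  show ?thesis unfolding 1 2 3 4 ..
qed

lemma decomp: fixes UL UR WL WR T :: "'a::comm_semiring_1 mat"
  assumes c: "UL \<in> carrier_mat n n" "UR \<in> carrier_mat n n" "WL \<in> carrier_mat n n" "WR \<in> carrier_mat n n" "T \<in> carrier_mat n n"
    and i: "WL * UL = 1\<^sub>m n" "UR * WR = 1\<^sub>m n"
  shows "WL * (UL * T * UR) * WR = T"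
proof -
  have "WL * (UL * T * UR) = WL * (UL * T) * UR" using assoc_mult_mat[of WL n n "UL * T" n UR n] c by auto
  also have "WL * (UL * T) = WL * UL * T" using assoc_mult_mat[of WL n n UL n T n] c by auto
  finally have "WL * (UL * T * UR) * WR = T * UR * WR" using i c by simp
  also have "\<dots> = T * (UR * WR)" using assoc_mult_mat[of T n n UR n WR n] c by auto
  finally show ?thesis using i c by simp
qed


theorem mainTheorem6:
  fixes \<Omega> :: "complex set" and l0 :: complex and n :: nat
    and T V Y :: "complex \<Rightarrow> complex mat" and m :: "nat \<Rightarrow> nat"
  assumes "open \<Omega>" and "l0 \<in> \<Omega>"
    and "mat_holo \<Omega> n n T"
    and "\<exists>z\<in>\<Omega>. det (T z) \<noteq> 0"
    and "det (T l0) = 0"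
    and "partial_multiplicities l0 n T m"
    and "left_canonical \<Omega> l0 n T m V"
    and "right_canonical \<Omega> l0 n T m Y"
  defines "r \<equiv> kernel_dim (T l0)"
  defines "\<Delta>inv \<equiv> (\<lambda>z. diag_fun r (\<lambda>i. inverse ((z - l0) ^ m i)))"
  shows "mero_invertible l0 (\<lambda>z. V z * T z * Y z) \<and>
    (mero_congr l0 r r (\<lambda>z. \<Delta>inv z * (V z * T z * Y z) * \<Delta>inv z) \<Delta>inv \<longleftrightarrow>
     mero_congr l0 r r (\<lambda>z. mat_inv (V z * T z * Y z)) \<Delta>inv)"
proof -
  note TH = assms(3)
  from assms(6) have mono: "\<forall>i j. i \<le> j \<longrightarrow> j < n \<longrightarrow> m j \<le> m i"
    unfolding partial_multiplicities_def by blast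
  have pm: "\<exists>UL UR. unimodular_at l0 n UL \<and> unimodular_at l0 n UR \<and>
        (\<exists>e>0. \<forall>z\<in>ball l0 e. UL z * T z * UR z = diag_fun n (\<lambda>i. (z - l0) ^ m i))"
    using assms(6) unfolding partial_multiplicities_def by (rule conjunct2)
  obtain UL where "\<exists>UR. unimodular_at l0 n UL \<and> unimodular_at l0 n UR \<and>
        (\<exists>e>0. \<forall>z\<in>ball l0 e. UL z * T z * UR z = diag_fun n (\<lambda>i. (z - l0) ^ m i))"
    using pm by (rule exE)
  then obtain UR where PP: "unimodular_at l0 n UL \<and> unimodular_at l0 n UR \<and>
        (\<exists>e>0. \<forall>z\<in>ball l0 e. UL z * T z * UR z = diag_fun n (\<lambda>i. (z - l0) ^ m i))"
    by (rule exE)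
  hence uL: "unimodular_at l0 n UL" and uR: "unimodular_at l0 n UR"
    and ex0: "\<exists>e>0. \<forall>z\<in>ball l0 e. UL z * T z * UR z = diag_fun n (\<lambda>i. (z - l0) ^ m i)" by auto
  from ex0 obtain e0 where e0: "e0 > 0" and D0: "\<forall>z\<in>ball l0 e0. UL z * T z * UR z = diag_fun n (\<lambda>i. (z - l0) ^ m i)"
    by (elim exE conjE) (rule that)
  have "\<exists>e>0. \<exists>W. mat_holo (ball l0 e) n n UL \<and> mat_holo (ball l0 e) n n W \<and>
       (\<forall>z\<in>ball l0 e. UL z * W z = 1\<^sub>m n \<and> W z * UL z = 1\<^sub>m n)" using uL unfolding unimodular_at_def .
  then obtain e1 where "e1 > 0 \<and> (\<exists>W. mat_holo (ball l0 e1) n n UL \<and> mat_holo (ball l0 e1) n n W \<and>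
       (\<forall>z\<in>ball l0 e1. UL z * W z = 1\<^sub>m n \<and> W z * UL z = 1\<^sub>m n))" by (rule exE)
  then obtain WL where e1: "e1 > 0" "mat_holo (ball l0 e1) n n UL" "mat_holo (ball l0 e1) n n WL"
    "\<forall>z\<in>ball l0 e1. UL z * WL z = 1\<^sub>m n \<and> WL z * UL z = 1\<^sub>m n"
    by (elim conjE exE) (rule that)
  have "\<exists>e>0. \<exists>W. mat_holo (ball l0 e) n n UR \<and> mat_holo (ball l0 e) n n W \<and>
       (\<forall>z\<in>ball l0 e. UR z * W z = 1\<^sub>m n \<and> W z * UR z = 1\<^sub>m n)" using uR unfolding unimodular_at_def .
  then obtain e2 where "e2 > 0 \<and> (\<exists>W. mat_holo (ball l0 e2) n n UR \<and> mat_holo (ball l0 e2) n n W \<and>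
       (\<forall>z\<in>ball l0 e2. UR z * W z = 1\<^sub>m n \<and> W z * UR z = 1\<^sub>m n))" by (rule exE)
  then obtain WR where e2: "e2 > 0" "mat_holo (ball l0 e2) n n UR" "mat_holo (ball l0 e2) n n WR"
    "\<forall>z\<in>ball l0 e2. UR z * WR z = 1\<^sub>m n \<and> WR z * UR z = 1\<^sub>m n"
    by (elim conjE exE) (rule that)
  from assms(1,2) obtain e3 where e3: "e3 > 0" "ball l0 e3 \<subseteq> \<Omega>" using open_contains_ball by blast
  define e where "e = min (min e0 e1) (min e2 e3)"
  have e: "e > 0" using e0 e1 e2 e3 unfolding e_def by auto
  have sub: "ball l0 e \<subseteq> ball l0 e0" "ball l0 e \<subseteq> ball l0 e1" "ball l0 e \<subseteq> ball l0 e2" "ball l0 e \<subseteq> ball l0 e3"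
    unfolding e_def by auto
  have bO: "ball l0 e \<subseteq> \<Omega>" using sub e3 by auto
  have l0b: "l0 \<in> ball l0 e" using e by simp
  have hUL: "mat_holo (ball l0 e) n n UL" by (rule mat_holo_subset[OF e1(2) sub(2)])
  have hWL: "mat_holo (ball l0 e) n n WL" by (rule mat_holo_subset[OF e1(3) sub(2)])
  have hUR: "mat_holo (ball l0 e) n n UR" by (rule mat_holo_subset[OF e2(2) sub(3)])
  have hWR: "mat_holo (ball l0 e) n n WR" by (rule mat_holo_subset[OF e2(3) sub(3)])
  have inv: "\<forall>z\<in>ball l0 e. UL z * WL z = 1\<^sub>m n \<and> WL z * UL z = 1\<^sub>m n \<and> UR z * WR z = 1\<^sub>m n \<and> WR z * UR z = 1\<^sub>m n"
    using e1(4) e2(4) sub by blast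
  have D: "\<forall>z\<in>ball l0 e. UL z * T z * UR z = diag_fun n (\<lambda>i. (z - l0) ^ m i)"
    using D0 sub by blast
  have Tc: "\<And>z. T z \<in> carrier_mat n n" using TH unfolding mat_holo_def by auto
  have ULc: "\<And>z. UL z \<in> carrier_mat n n" using hUL unfolding mat_holo_def by auto
  have URc: "\<And>z. UR z \<in> carrier_mat n n" using hUR unfolding mat_holo_def by auto
  have WLc: "\<And>z. WL z \<in> carrier_mat n n" using hWL unfolding mat_holo_def by auto
  have WRc: "\<And>z. WR z \<in> carrier_mat n n" using hWR unfolding mat_holo_def by auto
  note CR = core_right[OF e bO TH hUL hUR hWL hWR inv D mono assms(8) r_def[THEN meta_eq_to_obj_eq]]
  have sj: "\<forall>j<n. (j < r \<longleftrightarrow> 0 < m j)" and rn: "r \<le> n" using CR(3,4) by auto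
  \<comment> \<open>left side via transposition\<close>
  have kd: "kernel_dim (transpose_mat (T l0)) = kernel_dim (T l0)"
  proof -
    have "kernel_dim (T l0) = card {j. j < n \<and> 0 < m j}"
    proof (rule pm_kernel[OF Tc[of l0] ULc[of l0] WLc[of l0] URc[of l0] WRc[of l0]])
      show "WL l0 * UL l0 = 1\<^sub>m n" "UR l0 * WR l0 = 1\<^sub>m n" using inv l0b by auto
      show "UL l0 * T l0 * UR l0 = diag_fun n (\<lambda>i. 0 ^ m i)" using D l0b by auto
    qed (rule mono)
    moreover have "kernel_dim (transpose_mat (T l0)) = card {j. j < n \<and> 0 < m j}"
    proof (rule pm_kernel[of _ n "transpose_mat (UR l0)" "transpose_mat (WR l0)" "transpose_mat (UL l0)" "transpose_mat (WL l0)"])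
      show "transpose_mat (WR l0) * transpose_mat (UR l0) = 1\<^sub>m n"
        by (rule tr2[OF URc WRc]) (use inv l0b in auto)
      show "transpose_mat (UL l0) * transpose_mat (WL l0) = 1\<^sub>m n"
        by (rule tr2[OF WLc ULc]) (use inv l0b in auto)
      have "transpose_mat (UL l0 * T l0 * UR l0) = transpose_mat (UR l0) * transpose_mat (T l0) * transpose_mat (UL l0)"
        by (rule tr3[OF ULc Tc URc])
      thus "transpose_mat (UR l0) * transpose_mat (T l0) * transpose_mat (UL l0) = diag_fun n (\<lambda>i. 0 ^ m i)"
        using D l0b by auto
    qed (use Tc ULc URc WLc WRc mono in auto)
    ultimately show ?thesis by simp
  qed
  have rcV: "right_canonical \<Omega> l0 n (\<lambda>z. transpose_mat (T z)) m (\<lambda>z. transpose_mat (V z))"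
    by (rule left_to_right[OF assms(7) kd TH])
  have invT: "\<forall>z\<in>ball l0 e. transpose_mat (UR z) * transpose_mat (WR z) = 1\<^sub>m n \<and> transpose_mat (WR z) * transpose_mat (UR z) = 1\<^sub>m n
     \<and> transpose_mat (UL z) * transpose_mat (WL z) = 1\<^sub>m n \<and> transpose_mat (WL z) * transpose_mat (UL z) = 1\<^sub>m n"
  proof
    fix z assume z: "z \<in> ball l0 e"
    show "transpose_mat (UR z) * transpose_mat (WR z) = 1\<^sub>m n \<and> transpose_mat (WR z) * transpose_mat (UR z) = 1\<^sub>m n
     \<and> transpose_mat (UL z) * transpose_mat (WL z) = 1\<^sub>m n \<and> transpose_mat (WL z) * transpose_mat (UL z) = 1\<^sub>m n"
      using tr2[OF WRc URc, of z] tr2[OF URc WRc, of z] tr2[OF WLc ULc, of z] tr2[OF ULc WLc, of z] inv z by auto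
  qed
  have DT: "\<forall>z\<in>ball l0 e. transpose_mat (UR z) * transpose_mat (T z) * transpose_mat (UL z) = diag_fun n (\<lambda>i. (z - l0) ^ m i)"
  proof
    fix z assume z: "z \<in> ball l0 e"
    have "transpose_mat (UL z * T z * UR z) = transpose_mat (UR z) * transpose_mat (T z) * transpose_mat (UL z)"
      by (rule tr3[OF ULc Tc URc])
    thus "transpose_mat (UR z) * transpose_mat (T z) * transpose_mat (UL z) = diag_fun n (\<lambda>i. (z - l0) ^ m i)"
      using D z by auto
  qed
  note CL = core_right[OF e bO mat_holo_transpose[OF TH] mat_holo_transpose[OF hUR] mat_holo_transpose[OF hUL]
      mat_holo_transpose[OF hWR] mat_holo_transpose[OF hWL] invT DT mono rcV, of r]
  have LB: "\<forall>p<r. \<forall>j<n. dvdz l0 (m p) (\<lambda>z. (z - l0)^(m j) * (transpose_mat (WL z) * transpose_mat (V z)) $$ (j,p))"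
    and LC: "\<forall>c\<in>carrier_vec r. (\<forall>j<r. (\<Sum>p<r. (transpose_mat (WL l0) * transpose_mat (V l0)) $$ (j,p) * c $ p) = 0) \<longrightarrow> c = 0\<^sub>v r"
    using CL(1,2) kd r_def by auto
  have RB: "\<forall>q<r. \<forall>j<n. dvdz l0 (m q) (\<lambda>z. (z - l0)^(m j) * (WR z * Y z) $$ (j,q))"
    and RC: "\<forall>c\<in>carrier_vec r. (\<forall>j<r. (\<Sum>q<r. (WR l0 * Y l0) $$ (j,q) * c $ q) = 0) \<longrightarrow> c = 0\<^sub>v r"
    using CR(1,2) by auto
  have VH: "mat_holo \<Omega> r n V" using assms(7) unfolding left_canonical_def Let_def r_def by auto
  have YH: "mat_holo \<Omega> n r Y" using assms(8) unfolding right_canonical_def Let_def r_def by auto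
  have Vc: "\<And>z. V z \<in> carrier_mat r n" using VH unfolding mat_holo_def by auto
  have Yc: "\<And>z. Y z \<in> carrier_mat n r" using YH unfolding mat_holo_def by auto
  define Vp where "Vp z = V z * WL z" for z
  define Yp where "Yp z = WR z * Y z" for z
  have Vpc: "\<And>z. Vp z \<in> carrier_mat r n" unfolding Vp_def using Vc WLc by (auto intro: mult_carrier_mat)
  have Ypc: "\<And>z. Yp z \<in> carrier_mat n r" unfolding Yp_def using Yc WRc by (auto intro: mult_carrier_mat)
  have aV: "\<And>i j. i < r \<Longrightarrow> j < n \<Longrightarrow> (\<lambda>z. V z $$ (i,j)) analytic_on {l0}"
    using mat_holo_ana[OF VH bO e] by blast
  have aY: "\<And>i j. i < n \<Longrightarrow> j < r \<Longrightarrow> (\<lambda>z. Y z $$ (i,j)) analytic_on {l0}"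
    using mat_holo_ana[OF YH bO e] by blast
  have aWL: "\<And>i j. i < n \<Longrightarrow> j < n \<Longrightarrow> (\<lambda>z. WL z $$ (i,j)) analytic_on {l0}"
    using mat_holo_ana[OF hWL subset_refl e] by blast
  have aWR: "\<And>i j. i < n \<Longrightarrow> j < n \<Longrightarrow> (\<lambda>z. WR z $$ (i,j)) analytic_on {l0}"
    using mat_holo_ana[OF hWR subset_refl e] by blast
  have aVp: "(\<lambda>z. Vp z $$ (p,j)) analytic_on {l0}" if "p < r" "j < n" for p j
  proof -
    have eq: "(\<lambda>z. Vp z $$ (p,j)) = (\<lambda>z. \<Sum>k<n. V z $$ (p,k) * WL z $$ (k,j))"
      unfolding Vp_def using mult_entry[OF Vc WLc that] by auto
    show ?thesis unfolding eq using that by (intro analytic_intros aV aWL) auto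
  qed
  have aYp: "(\<lambda>z. Yp z $$ (j,q)) analytic_on {l0}" if "j < n" "q < r" for j q
  proof -
    have eq: "(\<lambda>z. Yp z $$ (j,q)) = (\<lambda>z. \<Sum>k<n. WR z $$ (j,k) * Y z $$ (k,q))"
      unfolding Yp_def using mult_entry[OF WRc Yc that] by auto
    show ?thesis unfolding eq using that by (intro analytic_intros aWR aY) auto
  qed
  have trV: "(transpose_mat (WL z) * transpose_mat (V z)) $$ (j,p) = Vp z $$ (p,j)" if "p < r" "j < n" for z p j
  proof -
    have "transpose_mat (WL z) * transpose_mat (V z) = transpose_mat (Vp z)"
      unfolding Vp_def by (rule transpose_mult[OF Vc WLc, symmetric])
    thus ?thesis using Vpc[of z] that by simp
  qed
  have LBv: "dvdz l0 (m p) (\<lambda>z. (z - l0)^(m j) * Vp z $$ (p,j))" if "p < r" "j < n" for p j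
    using LB that trV by simp
  have Vp0: "Vp l0 $$ (p,j) = 0" if "p < r" "r \<le> j" "j < n" for p j
  proof -
    have mj: "m j = 0" using sj that by auto
    have "p < n" using that rn by simp
    hence "p < r \<longleftrightarrow> 0 < m p" using sj by blast
    hence "0 < m p" using that(1) by blast
    hence "dvdz l0 (Suc 0) (\<lambda>z. (z - l0)^0 * Vp z $$ (p,j))"
      using dvdz_mono[OF LBv[OF that(1,3)]] mj by simp
    from dvdz_zero_at[OF this aVp[OF that(1,3)]] show ?thesis .
  qed
  define g where "g j q = (SOME g. g analytic_on {l0} \<and> (\<forall>\<^sub>F z in nhds l0. (z - l0)^(m j) * Yp z $$ (j,q) = (z - l0)^(m q) * g z))" for j q
  have gP: "g j q analytic_on {l0} \<and> (\<forall>\<^sub>F z in nhds l0. (z - l0)^(m j) * Yp z $$ (j,q) = (z - l0)^(m q) * g j q z)"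
    if "q < r" "j < n" for j q
  proof -
    have "\<exists>g. g analytic_on {l0} \<and> (\<forall>\<^sub>F z in nhds l0. (z - l0)^(m j) * Yp z $$ (j,q) = (z - l0)^(m q) * g z)"
      using RB that unfolding dvdz_def Yp_def by blast
    thus ?thesis unfolding g_def by (rule someI_ex)
  qed
  have ag: "g j q analytic_on {l0}" if "q < r" "j < n" for j q using gP[OF that] by blast
  define X where "X z = mat r r (\<lambda>(p,q). \<Sum>j<n. Vp z $$ (p,j) * g j q z)" for z
  define \<Delta> where "\<Delta> z = diag_fun r (\<lambda>i. (z - l0) ^ m i)" for z
  have Xc: "\<And>z. X z \<in> carrier_mat r r" unfolding X_def by simp
  have Dc: "\<And>z. \<Delta> z \<in> carrier_mat r r" unfolding \<Delta>_def diag_fun_def by simp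
  have Dic: "\<And>z. \<Delta>inv z \<in> carrier_mat r r" unfolding \<Delta>inv_def diag_fun_def by simp
  have dimsM[simp]: "\<And>z. dim_row (X z) = r" "\<And>z. dim_col (X z) = r" "\<And>z. dim_row (\<Delta> z) = r" "\<And>z. dim_col (\<Delta> z) = r"
    "\<And>z. dim_row (\<Delta>inv z) = r" "\<And>z. dim_col (\<Delta>inv z) = r" "\<And>z. dim_row (V z) = r" "\<And>z. dim_col (V z) = n"
    "\<And>z. dim_row (Y z) = n" "\<And>z. dim_col (Y z) = r" "\<And>z. dim_row (T z) = n" "\<And>z. dim_col (T z) = n"
    "\<And>z. dim_row (Vp z) = r" "\<And>z. dim_col (Vp z) = n" "\<And>z. dim_row (Yp z) = n" "\<And>z. dim_col (Yp z) = r"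
    using carrier_matD[OF Xc] carrier_matD[OF Dc] carrier_matD[OF Dic] carrier_matD[OF Vc] carrier_matD[OF Yc]
      carrier_matD[OF Tc] carrier_matD[OF Vpc] carrier_matD[OF Ypc] by auto
  have aX: "(\<lambda>z. X z $$ (p,q)) analytic_on {l0}" if "p < r" "q < r" for p q
  proof -
    have eq: "(\<lambda>z. X z $$ (p,q)) = (\<lambda>z. \<Sum>j<n. Vp z $$ (p,j) * g j q z)" unfolding X_def using that by auto
    show ?thesis unfolding eq using that by (intro analytic_intros aVp ag) auto
  qed
  have VTYe: "(V z * T z * Y z) $$ (p,q) = (\<Sum>j<n. Vp z $$ (p,j) * ((z - l0)^(m j) * Yp z $$ (j,q)))"
    if z: "z \<in> ball l0 e" and pq: "p < r" "q < r" for z p q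
  proof -
    have "T z = WL z * (UL z * T z * UR z) * WR z"
      by (rule decomp[symmetric, OF ULc URc WLc WRc Tc]) (use inv z in auto)
    also have "\<dots> = WL z * diag_fun n (\<lambda>i. (z - l0) ^ m i) * WR z" using D z by simp
    finally have "V z * T z * Y z = V z * (WL z * diag_fun n (\<lambda>i. (z - l0) ^ m i) * WR z) * Y z" by simp
    also have "\<dots> = Vp z * (diag_fun n (\<lambda>i. (z - l0) ^ m i) * Yp z)"
      unfolding Vp_def Yp_def by (rule assoc5[OF Vc WLc _ WRc Yc]) (simp add: diag_fun_def)
    finally have eq: "V z * T z * Y z = Vp z * (diag_fun n (\<lambda>i. (z - l0) ^ m i) * Yp z)" .
    have "(V z * T z * Y z) $$ (p,q) = (\<Sum>j<n. Vp z $$ (p,j) * (diag_fun n (\<lambda>i. (z - l0) ^ m i) * Yp z) $$ (j,q))"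
      unfolding eq by (rule mult_entry[OF Vpc _ pq]) (rule mult_carrier_mat[OF diag_fun_carrier(1) Ypc])
    also have "\<dots> = (\<Sum>j<n. Vp z $$ (p,j) * ((z - l0)^(m j) * Yp z $$ (j,q)))"
    proof (rule sum.cong)
      fix x assume "x \<in> {..<n}"
      thus "Vp z $$ (p,x) * (diag_fun n (\<lambda>i. (z - l0) ^ m i) * Yp z) $$ (x,q) = Vp z $$ (p,x) * ((z - l0)^(m x) * Yp z $$ (x,q))"
        by (subst diag_mult_entry[OF Ypc]) (use pq in auto)
    qed simp
    finally show ?thesis .
  qed
  have evb: "\<forall>\<^sub>F z in nhds l0. z \<in> ball l0 e" using e by (intro eventually_nhds_in_open) auto
  have evg: "\<forall>\<^sub>F z in nhds l0. \<forall>jq\<in>{..<n} \<times> {..<r}. (z - l0)^(m (fst jq)) * Yp z $$ (fst jq, snd jq) = (z - l0)^(m (snd jq)) * g (fst jq) (snd jq) z"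
    by (rule eventually_ball_finite) (use gP in auto)
  have E1: "\<forall>\<^sub>F z in nhds l0. V z * T z * Y z = X z * \<Delta> z"
    using evb evg
  proof eventually_elim
    case (elim z)
    show ?case
    proof (rule eq_matI)
      fix p q assume pq: "p < dim_row (X z * \<Delta> z)" "q < dim_col (X z * \<Delta> z)"
      hence pq: "p < r" "q < r" using Xc Dc by auto
      have "(V z * T z * Y z) $$ (p,q) = (\<Sum>j<n. Vp z $$ (p,j) * ((z - l0)^(m q) * g j q z))"
        unfolding VTYe[OF elim(1) pq] by (rule sum.cong) (use elim(2) pq in auto)
      also have "\<dots> = X z $$ (p,q) * (z - l0)^(m q)"
        unfolding X_def using pq by (simp add: sum_distrib_left sum_distrib_right mult_ac)
      also have "\<dots> = (X z * \<Delta> z) $$ (p,q)" unfolding \<Delta>_def by (subst mult_diag_entry[OF Xc]) (use pq in auto)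
      finally show "(V z * T z * Y z) $$ (p,q) = (X z * \<Delta> z) $$ (p,q)" .
    qed (use Vc Tc Yc Xc Dc in auto)
  qed
  define P where "P = mat r r (\<lambda>(p,j). Vp l0 $$ (p,j))"
  define G where "G = mat r r (\<lambda>(j,q). g j q l0)"
  have X0: "X l0 = P * G"
  proof (rule eq_matI)
    fix p q assume "p < dim_row (P * G)" "q < dim_col (P * G)"
    hence pq: "p < r" "q < r" unfolding P_def G_def by auto
    have "X l0 $$ (p,q) = (\<Sum>j<n. Vp l0 $$ (p,j) * g j q l0)" unfolding X_def using pq by simp
    also have "\<dots> = (\<Sum>j<r. Vp l0 $$ (p,j) * g j q l0)"
      by (rule sum.mono_neutral_right) (use rn Vp0 pq in auto)
    also have "\<dots> = (P * G) $$ (p,q)"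
      by (subst mult_entry[of _ r r _ r]) (use pq in \<open>auto simp: P_def G_def intro!: sum.cong\<close>)
    finally show "X l0 $$ (p,q) = (P * G) $$ (p,q)" .
  qed (auto simp: X_def P_def G_def)
  have Pc: "P \<in> carrier_mat r r" and Gc: "G \<in> carrier_mat r r" unfolding P_def G_def by auto
  have detP: "det P \<noteq> 0"
  proof
    assume "det P = 0"
    hence "det (transpose_mat P) = 0" using det_transpose[OF Pc] by simp
    then obtain c where c: "c \<in> carrier_vec r" "c \<noteq> 0\<^sub>v r" "transpose_mat P *\<^sub>v c = 0\<^sub>v r"
      using det_0_iff_vec_prod_zero[of "transpose_mat P" r] Pc by auto
    have "\<forall>j<r. (\<Sum>p<r. (transpose_mat (WL l0) * transpose_mat (V l0)) $$ (j,p) * c $ p) = 0"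
    proof (intro allI impI)
      fix j assume j: "j < r"
      have "(\<Sum>p<r. (transpose_mat (WL l0) * transpose_mat (V l0)) $$ (j,p) * c $ p) = (\<Sum>p<r. transpose_mat P $$ (j,p) * c $ p)"
        by (rule sum.cong) (use j rn in \<open>auto simp: trV P_def\<close>)
      also have "\<dots> = (transpose_mat P *\<^sub>v c) $ j"
        by (rule mult_vec_entry[symmetric, of _ r r]) (use Pc c j in auto)
      finally show "(\<Sum>p<r. (transpose_mat (WL l0) * transpose_mat (V l0)) $$ (j,p) * c $ p) = 0" using c(3) j by simp
    qed
    with LC c show False by blast
  qed
  define Az where "Az z = mat r r (\<lambda>(j,q). Yp z $$ (j,q))" for z
  define Gz where "Gz z = mat r r (\<lambda>(j,q). g j q z)" for z
  have detA: "det (Az l0) \<noteq> 0"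
  proof
    assume "det (Az l0) = 0"
    then obtain c where c: "c \<in> carrier_vec r" "c \<noteq> 0\<^sub>v r" "Az l0 *\<^sub>v c = 0\<^sub>v r"
      using det_0_iff_vec_prod_zero[of "Az l0" r] by (auto simp: Az_def)
    have "\<forall>j<r. (\<Sum>q<r. (WR l0 * Y l0) $$ (j,q) * c $ q) = 0"
    proof (intro allI impI)
      fix j assume j: "j < r"
      have "(\<Sum>q<r. (WR l0 * Y l0) $$ (j,q) * c $ q) = (\<Sum>q<r. Az l0 $$ (j,q) * c $ q)"
        by (rule sum.cong) (use j in \<open>auto simp: Az_def Yp_def\<close>)
      also have "\<dots> = (Az l0 *\<^sub>v c) $ j"
        by (rule mult_vec_entry[symmetric, of _ r r]) (use c j in \<open>auto simp: Az_def\<close>)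
      finally show "(\<Sum>q<r. (WR l0 * Y l0) $$ (j,q) * c $ q) = 0" using c(3) j by simp
    qed
    with RC c show False by blast
  qed
  have detG: "det G = det (Az l0)"
  proof -
    have aAz: "(\<lambda>z. det (Az z)) analytic_on {l0}"
      by (rule ana_det[of _ r]) (use rn in \<open>auto simp: Az_def intro!: aYp\<close>)
    have aGz: "(\<lambda>z. det (Gz z)) analytic_on {l0}"
      by (rule ana_det[of _ r]) (use rn in \<open>auto simp: Gz_def intro!: ag\<close>)
    have "\<forall>\<^sub>F z in at l0. det (Az z) = det (Gz z)"
      using nhds_to_at[OF evg] at_neq
    proof eventually_elim
      case (elim z)
      have dd: "det (\<Delta> z) \<noteq> 0" unfolding \<Delta>_def det_diag_fun using elim(2) by simp
      have "\<Delta> z * Az z = Gz z * \<Delta> z"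
      proof (rule eq_matI)
        fix j q assume "j < dim_row (Gz z * \<Delta> z)" "q < dim_col (Gz z * \<Delta> z)"
        hence jq: "j < r" "q < r" unfolding Gz_def \<Delta>_def diag_fun_def by auto
        have "(\<Delta> z * Az z) $$ (j,q) = (z - l0)^(m j) * Yp z $$ (j,q)"
          unfolding \<Delta>_def by (subst diag_mult_entry) (use jq in \<open>auto simp: Az_def\<close>)
        also have "\<dots> = (z - l0)^(m q) * g j q z" using elim(1) jq rn by auto
        also have "\<dots> = (Gz z * \<Delta> z) $$ (j,q)"
          unfolding \<Delta>_def by (subst mult_diag_entry) (use jq in \<open>auto simp: Gz_def\<close>)
        finally show "(\<Delta> z * Az z) $$ (j,q) = (Gz z * \<Delta> z) $$ (j,q)" .
      qed (auto simp: Az_def Gz_def \<Delta>_def diag_fun_def)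
      hence "det (\<Delta> z * Az z) = det (Gz z * \<Delta> z)" by simp
      moreover have "Az z \<in> carrier_mat r r" "Gz z \<in> carrier_mat r r" unfolding Az_def Gz_def by auto
      ultimately have "det (\<Delta> z) * det (Az z) = det (Gz z) * det (\<Delta> z)"
        using det_mult[OF Dc, of "Az z" z] det_mult[of "Gz z" r "\<Delta> z"] Dc by metis
      thus ?case using dd by (metis mult.commute mult_left_cancel)
    qed
    from analytic_eq_at[OF aAz aGz this] show ?thesis by (simp add: Gz_def G_def)
  qed
  have detX0: "det (X l0) \<noteq> 0"
    unfolding X0 det_mult[OF Pc Gc] using detP detA detG by simp
  have aDX: "(\<lambda>z. det (X z)) analytic_on {l0}" by (rule ana_det[OF Xc aX])
  have evX: "\<forall>\<^sub>F z in at l0. det (X z) \<noteq> 0"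
    using analytic_at_imp_isCont[OF aDX] detX0 unfolding isCont_def by (rule tendsto_imp_eventually_ne)
  have evD: "\<forall>\<^sub>F z in at l0. det (\<Delta> z) \<noteq> 0"
    using at_neq by eventually_elim (simp add: \<Delta>_def det_diag_fun)
  have part1: "mero_invertible l0 (\<lambda>z. V z * T z * Y z)"
    unfolding mero_invertible_def using nhds_to_at[OF E1] evX evD
    by eventually_elim (simp add: det_mult[OF Xc Dc])
  define Xi where "Xi z = mat_inv (X z)" for z
  have aXi: "(\<lambda>z. Xi z $$ (p,q)) analytic_on {l0}" if "p < r" "q < r" for p q
    unfolding Xi_def by (rule ana_mat_inv_entry[OF Xc aX detX0 that])
  have Xic: "\<And>z. Xi z \<in> carrier_mat r r" unfolding Xi_def mat_inv_def using Xc by (simp add: adj_mat)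
  have evI: "\<forall>\<^sub>F z in at l0. X z * Xi z = 1\<^sub>m r \<and> Xi z * X z = 1\<^sub>m r"
    using evX by eventually_elim (use mat_inv_props[OF Xc] in \<open>simp add: Xi_def\<close>)
  have DDi: "\<forall>\<^sub>F z in at l0. \<Delta> z * \<Delta>inv z = 1\<^sub>m r"
    using at_neq
  proof eventually_elim
    case (elim z)
    show ?case
    proof (rule eq_matI)
      fix i j assume "i < dim_row (1\<^sub>m r)" "j < dim_col (1\<^sub>m r)"
      hence ij: "i < r" "j < r" by auto
      show "(\<Delta> z * \<Delta>inv z) $$ (i,j) = 1\<^sub>m r $$ (i,j)"
        unfolding \<Delta>_def by (subst diag_mult_entry) (use ij elim in \<open>auto simp: \<Delta>inv_def diag_fun_def\<close>)
    qed (auto simp: \<Delta>_def \<Delta>inv_def diag_fun_def)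
  qed
  have invV: "\<forall>\<^sub>F z in at l0. mat_inv (V z * T z * Y z) = \<Delta>inv z * Xi z"
    using nhds_to_at[OF E1] evX evD evI DDi
  proof eventually_elim
    case (elim z)
    have b1: "X z * \<Delta> z * (\<Delta>inv z * Xi z) = X z * (\<Delta> z * (\<Delta>inv z * Xi z))"
      by (rule assoc_mult_mat[OF Xc Dc]) (use Dic Xic in \<open>auto intro: mult_carrier_mat\<close>)
    have b2: "\<Delta> z * (\<Delta>inv z * Xi z) = \<Delta> z * \<Delta>inv z * Xi z"
      by (rule assoc_mult_mat[symmetric, OF Dc Dic Xic])
    have b3: "\<Delta> z * \<Delta>inv z * Xi z = Xi z" using elim(5) left_mult_one_mat[OF Xic] by simp
    have "X z * \<Delta> z * (\<Delta>inv z * Xi z) = 1\<^sub>m r" unfolding b1 b2 b3 using elim(4) by simp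
    moreover have "det (X z * \<Delta> z) \<noteq> 0" using elim(2,3) by (simp add: det_mult[OF Xc Dc])
    ultimately have "mat_inv (X z * \<Delta> z) = \<Delta>inv z * Xi z"
      by (intro mat_inv_unique[of _ r]) (use mult_carrier_mat[OF Xc Dc] mult_carrier_mat[OF Dic Xic] in auto)
    thus ?case using elim(1) by simp
  qed
  define F1 where "F1 p q z = inverse ((z - l0) ^ m p) * ((if p = q then 1 else 0) - X z $$ (p,q))" for p q z
  define F2 where "F2 p q z = inverse ((z - l0) ^ m p) * ((if p = q then 1 else 0) - Xi z $$ (p,q))" for p q z
  have Die: "\<Delta>inv z $$ (p,q) = inverse ((z - l0) ^ m p) * (if p = q then 1 else 0)" if "p < r" "q < r" for z p q
    unfolding \<Delta>inv_def diag_fun_def using that by simp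
  have c1: "mero_congr l0 r r (\<lambda>z. \<Delta>inv z * (V z * T z * Y z) * \<Delta>inv z) \<Delta>inv \<longleftrightarrow> (\<forall>p<r. \<forall>q<r. remv l0 (F1 p q))"
  proof -
    have "\<forall>\<^sub>F z in at l0. \<forall>p<r. \<forall>q<r. \<Delta>inv z $$ (p,q) - (\<Delta>inv z * (V z * T z * Y z) * \<Delta>inv z) $$ (p,q) = F1 p q z"
      using nhds_to_at[OF E1] at_neq
    proof eventually_elim
      case (elim z)
      show ?case
      proof (intro allI impI)
        fix p q assume pq: "p < r" "q < r"
        have VTc: "V z * T z * Y z \<in> carrier_mat r r" using elim(1) mult_carrier_mat[OF Xc Dc] by simp
        have h1: "(\<Delta>inv z * (V z * T z * Y z) * \<Delta>inv z) $$ (p,q) = (\<Delta>inv z * (V z * T z * Y z)) $$ (p,q) * inverse ((z - l0) ^ m q)"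
          unfolding \<Delta>inv_def by (subst mult_diag_entry[OF mult_carrier_mat[OF diag_fun_carrier(1) VTc]]) (use pq in auto)
        have h2: "(\<Delta>inv z * (V z * T z * Y z)) $$ (p,q) = inverse ((z - l0) ^ m p) * (V z * T z * Y z) $$ (p,q)"
          unfolding \<Delta>inv_def by (subst diag_mult_entry[OF VTc]) (use pq in auto)
        have h3: "(V z * T z * Y z) $$ (p,q) = X z $$ (p,q) * (z - l0) ^ m q"
          unfolding elim(1) \<Delta>_def by (rule mult_diag_entry[OF Xc pq])
        have bnz: "(z - l0) ^ m q \<noteq> 0" using elim(2) by simp
        have "(\<Delta>inv z * (V z * T z * Y z) * \<Delta>inv z) $$ (p,q) = inverse ((z - l0) ^ m p) * X z $$ (p,q) * ((z - l0) ^ m q * inverse ((z - l0) ^ m q))"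
          unfolding h1 h2 h3 by (simp only: mult.assoc)
        also have "\<dots> = inverse ((z - l0) ^ m p) * X z $$ (p,q)" using bnz by simp
        finally show "\<Delta>inv z $$ (p,q) - (\<Delta>inv z * (V z * T z * Y z) * \<Delta>inv z) $$ (p,q) = F1 p q z"
          unfolding F1_def Die[OF pq] by (simp add: right_diff_distrib)
      qed
    qed
    note evall = this
    have ev: "\<forall>\<^sub>F z in at l0. \<Delta>inv z $$ (p,q) - (\<Delta>inv z * (V z * T z * Y z) * \<Delta>inv z) $$ (p,q) = F1 p q z"
      if pq: "p < r" "q < r" for p q
      using evall by (rule eventually_mono) (use pq in simp)
    show ?thesis unfolding mero_congr_iff
    proof (intro iffI allI impI)
      fix p q assume h: "\<forall>p<r. \<forall>q<r. remv l0 (\<lambda>z. \<Delta>inv z $$ (p,q) - (\<Delta>inv z * (V z * T z * Y z) * \<Delta>inv z) $$ (p,q))"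
        and pq: "p < r" "q < r"
      show "remv l0 (F1 p q)" by (rule remv_cong[OF _ ev[OF pq]]) (rule h[rule_format, OF pq])
    next
      fix p q assume h: "\<forall>p<r. \<forall>q<r. remv l0 (F1 p q)" and pq: "p < r" "q < r"
      have "\<forall>\<^sub>F z in at l0. F1 p q z = \<Delta>inv z $$ (p,q) - (\<Delta>inv z * (V z * T z * Y z) * \<Delta>inv z) $$ (p,q)"
        using ev[OF pq] by (rule eventually_mono) simp
      thus "remv l0 (\<lambda>z. \<Delta>inv z $$ (p,q) - (\<Delta>inv z * (V z * T z * Y z) * \<Delta>inv z) $$ (p,q))"
        by (rule remv_cong[OF h[rule_format, OF pq]])
    qed
  qed
  have c2: "mero_congr l0 r r (\<lambda>z. mat_inv (V z * T z * Y z)) \<Delta>inv \<longleftrightarrow> (\<forall>p<r. \<forall>q<r. remv l0 (F2 p q))"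
  proof -
    have "\<forall>\<^sub>F z in at l0. \<forall>p<r. \<forall>q<r. \<Delta>inv z $$ (p,q) - mat_inv (V z * T z * Y z) $$ (p,q) = F2 p q z"
      using invV
    proof eventually_elim
      case (elim z)
      show ?case
      proof (intro allI impI)
        fix p q assume pq: "p < r" "q < r"
        have "mat_inv (V z * T z * Y z) $$ (p,q) = inverse ((z - l0) ^ m p) * Xi z $$ (p,q)"
          unfolding elim \<Delta>inv_def by (subst diag_mult_entry[OF Xic]) (use pq in auto)
        thus "\<Delta>inv z $$ (p,q) - mat_inv (V z * T z * Y z) $$ (p,q) = F2 p q z"
          unfolding F2_def Die[OF pq] by (simp add: right_diff_distrib)
      qed
    qed
    note evall = this
    have ev: "\<forall>\<^sub>F z in at l0. \<Delta>inv z $$ (p,q) - mat_inv (V z * T z * Y z) $$ (p,q) = F2 p q z"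
      if pq: "p < r" "q < r" for p q
      using evall by (rule eventually_mono) (use pq in simp)
    show ?thesis unfolding mero_congr_iff
    proof (intro iffI allI impI)
      fix p q assume h: "\<forall>p<r. \<forall>q<r. remv l0 (\<lambda>z. \<Delta>inv z $$ (p,q) - mat_inv (V z * T z * Y z) $$ (p,q))"
        and pq: "p < r" "q < r"
      show "remv l0 (F2 p q)" by (rule remv_cong[OF _ ev[OF pq]]) (rule h[rule_format, OF pq])
    next
      fix p q assume h: "\<forall>p<r. \<forall>q<r. remv l0 (F2 p q)" and pq: "p < r" "q < r"
      have "\<forall>\<^sub>F z in at l0. F2 p q z = \<Delta>inv z $$ (p,q) - mat_inv (V z * T z * Y z) $$ (p,q)"
        using ev[OF pq] by (rule eventually_mono) simp
      thus "remv l0 (\<lambda>z. \<Delta>inv z $$ (p,q) - mat_inv (V z * T z * Y z) $$ (p,q))"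
        by (rule remv_cong[OF h[rule_format, OF pq]])
    qed
  qed
  have F21: "\<forall>\<^sub>F z in at l0. F2 p q z = - (\<Sum>k<r. F1 p k z * Xi z $$ (k,q))" if pq: "p < r" "q < r" for p q
    using evI
  proof eventually_elim
    case (elim z)
    define a where "a = inverse ((z - l0) ^ m p)"
    have s1: "(\<Sum>k<r. (if p = k then 1 else 0) * Xi z $$ (k,q)) = Xi z $$ (p,q)"
    proof -
      have "(\<Sum>k<r. (if p = k then 1 else 0) * Xi z $$ (k,q)) = (\<Sum>k<r. if p = k then Xi z $$ (k,q) else 0)"
        by (rule sum.cong) auto
      thus ?thesis using pq by simp
    qed
    have s2: "(\<Sum>k<r. X z $$ (p,k) * Xi z $$ (k,q)) = (if p = q then 1 else 0)"
      using mult_entry[OF Xc[of z] Xic[of z] pq] elim pq by simp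
    have S: "(\<Sum>k<r. ((if p = k then 1 else 0) - X z $$ (p,k)) * Xi z $$ (k,q)) = Xi z $$ (p,q) - (if p = q then 1 else 0)"
      unfolding left_diff_distrib sum_subtractf s1 s2 ..
    have "(\<Sum>k<r. F1 p k z * Xi z $$ (k,q)) = a * (\<Sum>k<r. ((if p = k then 1 else 0) - X z $$ (p,k)) * Xi z $$ (k,q))"
      unfolding F1_def a_def by (simp add: sum_distrib_left mult.assoc)
    thus ?case unfolding S F2_def a_def[symmetric] by (simp add: right_diff_distrib)
  qed
  have F12: "\<forall>\<^sub>F z in at l0. F1 p q z = - (\<Sum>k<r. F2 p k z * X z $$ (k,q))" if pq: "p < r" "q < r" for p q
    using evI
  proof eventually_elim
    case (elim z)
    define a where "a = inverse ((z - l0) ^ m p)"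
    have s1: "(\<Sum>k<r. (if p = k then 1 else 0) * X z $$ (k,q)) = X z $$ (p,q)"
    proof -
      have "(\<Sum>k<r. (if p = k then 1 else 0) * X z $$ (k,q)) = (\<Sum>k<r. if p = k then X z $$ (k,q) else 0)"
        by (rule sum.cong) auto
      thus ?thesis using pq by simp
    qed
    have s2: "(\<Sum>k<r. Xi z $$ (p,k) * X z $$ (k,q)) = (if p = q then 1 else 0)"
      using mult_entry[OF Xic[of z] Xc[of z] pq] elim pq by simp
    have S: "(\<Sum>k<r. ((if p = k then 1 else 0) - Xi z $$ (p,k)) * X z $$ (k,q)) = X z $$ (p,q) - (if p = q then 1 else 0)"
      unfolding left_diff_distrib sum_subtractf s1 s2 ..
    have "(\<Sum>k<r. F2 p k z * X z $$ (k,q)) = a * (\<Sum>k<r. ((if p = k then 1 else 0) - Xi z $$ (p,k)) * X z $$ (k,q))"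
      unfolding F2_def a_def by (simp add: sum_distrib_left mult.assoc)
    thus ?case unfolding S F1_def a_def[symmetric] by (simp add: right_diff_distrib)
  qed
  have "(\<forall>p<r. \<forall>q<r. remv l0 (F1 p q)) \<longleftrightarrow> (\<forall>p<r. \<forall>q<r. remv l0 (F2 p q))"
  proof
    assume h: "\<forall>p<r. \<forall>q<r. remv l0 (F1 p q)"
    show "\<forall>p<r. \<forall>q<r. remv l0 (F2 p q)"
    proof (intro allI impI)
      fix p q assume pq: "p < r" "q < r"
      have "remv l0 (\<lambda>z. - (\<Sum>k<r. F1 p k z * Xi z $$ (k,q)))"
        using h pq by (intro remv_uminus remv_sum remv_mult aXi) auto
      have "\<forall>\<^sub>F z in at l0. - (\<Sum>k<r. F1 p k z * Xi z $$ (k,q)) = F2 p q z"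
        using F21[OF pq] by (rule eventually_mono) simp
      thus "remv l0 (F2 p q)" by (rule remv_cong[OF \<open>remv l0 (\<lambda>z. - (\<Sum>k<r. F1 p k z * Xi z $$ (k,q)))\<close>])
    qed
  next
    assume h: "\<forall>p<r. \<forall>q<r. remv l0 (F2 p q)"
    show "\<forall>p<r. \<forall>q<r. remv l0 (F1 p q)"
    proof (intro allI impI)
      fix p q assume pq: "p < r" "q < r"
      have "remv l0 (\<lambda>z. - (\<Sum>k<r. F2 p k z * X z $$ (k,q)))"
        using h pq by (intro remv_uminus remv_sum remv_mult aX) auto
      have "\<forall>\<^sub>F z in at l0. - (\<Sum>k<r. F2 p k z * X z $$ (k,q)) = F1 p q z"
        using F12[OF pq] by (rule eventually_mono) simp
      thus "remv l0 (F1 p q)" by (rule remv_cong[OF \<open>remv l0 (\<lambda>z. - (\<Sum>k<r. F2 p k z * X z $$ (k,q)))\<close>])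
    qed
  qed
  thus ?thesis using part1 c1 c2 by simp
qed

end
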